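(* Let $\mathcal{A}_1,\dots,\mathcal{A}_n$ be finite labelled transition systems, let $\mathbf{A}=\mathcal{A}_1\parallel\cdots\parallel\mathcal{A}_n$, and let $\mathcal{A}_i$ be the interface. Assume that $\mathbf{A}$ is non-divergent (with respect to the interface $\mathcal{A}_i$). Then every run of Algorithm 1 with cut-off definition 1 (for every choice of the order in which possible extensions are added) terminates with a finite branching process $\mathcal{N}$ of $\mathbf{A}$, and the folding $\mathcal{S}_i$ of the interface projection $\mathcal{N}_i$ satisfies $\mathrm{Tr}(\mathcal{S}_i)=\mathrm{Tr}(\mathbf{A})|_{\Sigma_i}$, i.e. $\mathcal{S}_i$ is a summary of $\mathbf{A}$.
   Context: A labelled transition system (LTS) is $\mathcal{A}=(\Sigma,S,T,\lambda,s^0)$ with finite action set $\Sigma$, finite state set $S$, transitions $T\subseteq S\times S$, labelling $\lambda:T\to\Sigma$, initial state $s^0$. A finite or infinite sequence $t_1t_2\dots$ of transitions is an execution if $t_k=(s_{k-1},s_k)$ for states $s_0s_1\dots$; it is a history if $s_0=s^0$. A trace is the label sequence $\lambda(t_1)\lambda(t_2)\dots$ of a (finite or infinite) history; $\mathrm{Tr}(\mathcal{A})$ is the set of traces. For LTSs $\mathcal{A}_j=(\Sigma_j,S_j,T_j,\lambda_j,s^0_j)$, $j=1..n$, the parallel composition $\mathbf{A}=\mathcal{A}_1\parallel\cdots\parallel\mathcal{A}_n$ has actions $\Sigma=\bigcup_j\Sigma_j$, global states $(s_1,\dots,s_n)\in S_1\times\cdots\times S_n$, initial state $(s^0_1,\dots,s^0_n)$,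 and global transitions $\mathbf{t}=(t_1,\dots,t_n)\ne(\star,\dots,\star)$ with label $a$ such that for each $j$: $t_j$ is an $a$-transition of $T_j$ if $a\in\Sigma_j$, and $t_j=\star$ otherwise ($\mathbf{t}$ moves each $\mathcal{A}_j$ with $t_j\ne\star$ along $t_j$ and leaves the others unchanged; $\mathcal{A}_j$ participates in $\mathbf{t}$ iff $t_j\neq\star$). The preset ${}^\bullet\mathbf{t}$ is the set of source states of the $t_j\neq\star$, the postset $\mathbf{t}^\bullet$ the set of their target states. For a set $X$ of traces, $X|_{\Sigma_i}$ is the set of projections of its elements onto $\Sigma_i$ (deleting letters not in $\Sigma_i$). $\mathbf{A}$ with interface $\mathcal{A}_i$ is divergent if some infinite trace of $\mathbf{A}$ contains only finitely many occurrences of actions of $\Sigma_i$. Branching processes of $\mathbf{A}$ are Petri nets whose places (conditions) are labelled by local states and whose transitions (events) are labelled by global transitions (hence by actions), defined inductively: (1) the net with conditions $b^0_1,\dots,b^0_n$ labelled $s^0_1,\dots,s^0_n$, no events, initial marking $\{b^0_1,\dots,b^0_n\}$ is one; (2) if some reachable marking of a branching process $\mathcal{N}$ contains a set $M$ of conditions whose labels are exactly ${}^\bullet\mathbf{t}$ for a global transition $\mathbf{t}$, and $\mathcal{N}$ has no event labelled $\mathbf{t}$ with input set $M$, then adding a new event $e$ labelled $\mathbf{t}$ with input conditions $M$ and a fresh output condition labelled $s$ for every $s\in\mathbf{t}^\bullet$ yields a branching process (such an $e$ is a possible extension). $x<y$ means there is a nonempty arc path from node $x$ to node $y$. The past of event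 $e$ is $[e]=\{e':e'\le e\}$; $M(e)$ is the marking reached by firing exactly the events of $[e]$ from the initial marking; $M(e)_j$ is its unique condition labelled by a state of $\mathcal{A}_j$; $\mathrm{St}(e)$ is the global state formed by the labels of $M(e)$. An $i$-event is an event in which $\mathcal{A}_i$ participates. Interface projection: $\mathcal{N}_i$ is the LTS whose states are the conditions labelled by states of $\mathcal{A}_i$, initial state $b^0_i$, with a transition from $b$ to $b'$ labelled $a$ for each $i$-event with action $a$, input $i$-condition $b$ and output $i$-condition $b'$. Given an equivalence $\equiv$ on its states, the folding has states the classes $[b]_\equiv$, initial state $[b^0_i]_\equiv$, and a transition $([b]_\equiv,[b']_\equiv)$ labelled $a$ for each transition $(b,b')$ labelled $a$ of $\mathcal{N}_i$. Algorithm 1: start with the branching process without events and $co=\emptyset$. While there is a possible extension $e$ none of whose causal predecessors lies in $co$, choose any such $e$ and add it to $\mathcal{N}$; by cut-off definition 1, $e$ is a cut-off (put in $co$) if it is an $i$-event and $\mathcal{N}$ already contains another $i$-event $e'$ with $\mathrm{St}(e)=\mathrm{St}(e')$ ($e'$ is its companion). On termination, $\equiv$ is the smallest equivalence relation on $i$-conditions with $M(e)_i\equiv M(e')_i$ for every cut-off $e$ with companion $e'$, and the output is the folding $\mathcal{S}_i$ of $\mathcal{N}_i$ under $\equiv$. *)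

theory Defs
  imports Main "HOL-Library.FSet" "HOL-Library.Infinite_Set"
begin

record ('a, 's) lts =
  lts_acts  :: "'a set"
  lts_states :: "'s set"
  lts_trans :: "('s \<times> 's) set"
  lts_lab   :: "'s \<times> 's \<Rightarrow> 'a"
  lts_init  :: 's

definition finite_lts :: "('a, 's) lts \<Rightarrow> bool" where
  "finite_lts L \<longleftrightarrow> finite (lts_acts L) \<and> finite (lts_states L)
     \<and> lts_trans L \<subseteq> lts_states L \<times> lts_states L
     \<and> lts_init L \<in> lts_states L
     \<and> (\<forall>t \<in> lts_trans L. lts_lab L t \<in> lts_acts L)"

datatype 'a trace = Fin "'a list" | Inf "nat \<Rightarrow> 'a"

definition traces_of :: "'g \<Rightarrow> ('g \<Rightarrow> 'a \<Rightarrow> 'g \<Rightarrow> bool) \<Rightarrow> 'a trace set" where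
  "traces_of g0 step =
     {Fin xs | xs. \<exists>s. s 0 = g0 \<and> (\<forall>k < length xs. step (s k) (xs ! k) (s (Suc k)))}
   \<union> {Inf w | w. \<exists>s. s 0 = g0 \<and> (\<forall>k. step (s k) (w k) (s (Suc k)))}"

definition lts_step :: "('a, 's) lts \<Rightarrow> 's \<Rightarrow> 'a \<Rightarrow> 's \<Rightarrow> bool" where
  "lts_step L s a s' \<longleftrightarrow> (s, s') \<in> lts_trans L \<and> lts_lab L (s, s') = a"

definition Tr :: "('a, 's) lts \<Rightarrow> 'a trace set" where
  "Tr L = traces_of (lts_init L) (lts_step L)"

fun proj :: "'a set \<Rightarrow> 'a trace \<Rightarrow> 'a trace" where
  "proj B (Fin xs) = Fin (filter (\<lambda>a. a \<in> B) xs)"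
| "proj B (Inf w) =
     (if infinite {k. w k \<in> B} then Inf (w \<circ> enumerate {k. w k \<in> B})
      else Fin (map w (sorted_list_of_set {k. w k \<in> B})))"

text \<open>A global transition: an action together with a vector of local transitions,
  None playing the role of the idle symbol (star).\<close>
type_synonym 's gvec = "nat \<Rightarrow> ('s \<times> 's) option"

definition gacts :: "(nat \<Rightarrow> ('a, 's) lts) \<Rightarrow> nat \<Rightarrow> 'a set" where
  "gacts A n = (\<Union>j<n. lts_acts (A j))"

definition gtrans :: "(nat \<Rightarrow> ('a, 's) lts) \<Rightarrow> nat \<Rightarrow> ('a \<times> 's gvec) set" where
  "gtrans A n = {(a, t). a \<in> gacts A n \<and> (\<exists>j<n. t j \<noteq> None) \<and> (\<forall>j\<ge>n. t j = None)
      \<and> (\<forall>j<n. if a \<in> lts_acts (A j)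
                then (\<exists>tr. t j = Some tr \<and> tr \<in> lts_trans (A j) \<and> lts_lab (A j) tr = a)
                else t j = None)}"

definition gmove :: "'s gvec \<Rightarrow> (nat \<Rightarrow> 's) \<Rightarrow> (nat \<Rightarrow> 's) \<Rightarrow> bool" where
  "gmove t g g' \<longleftrightarrow> (\<forall>j. case t j of None \<Rightarrow> g' j = g j | Some (p, q) \<Rightarrow> g j = p \<and> g' j = q)"

definition ginit :: "(nat \<Rightarrow> ('a, 's) lts) \<Rightarrow> nat \<Rightarrow> 's" where
  "ginit A = (\<lambda>j. lts_init (A j))"

definition gstep :: "(nat \<Rightarrow> ('a, 's) lts) \<Rightarrow> nat \<Rightarrow> (nat \<Rightarrow> 's) \<Rightarrow> 'a \<Rightarrow> (nat \<Rightarrow> 's) \<Rightarrow> bool" where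
  "gstep A n g a g' \<longleftrightarrow> (\<exists>t. (a, t) \<in> gtrans A n \<and> gmove t g g')"

definition TrPar :: "(nat \<Rightarrow> ('a, 's) lts) \<Rightarrow> nat \<Rightarrow> 'a trace set" where
  "TrPar A n = traces_of (ginit A) (gstep A n)"

definition divergent :: "(nat \<Rightarrow> ('a, 's) lts) \<Rightarrow> nat \<Rightarrow> nat \<Rightarrow> bool" where
  "divergent A n i \<longleftrightarrow> (\<exists>w. Inf w \<in> TrPar A n \<and> finite {k. w k \<in> lts_acts (A i)})"

text \<open>Conditions are named by their origin: an initial condition of component j,
  or the output condition of component j of an event. Events are named by their
  label (global transition) and their set of input conditions.\<close>
datatype ('a, 's) cond = C0 nat 's | Cout "('a, 's) event" nat
     and ('a, 's) event = Ev 'a "'s gvec" "('a, 's) cond fset"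

fun eact :: "('a, 's) event \<Rightarrow> 'a" where "eact (Ev a t M) = a"
fun etr :: "('a, 's) event \<Rightarrow> 's gvec" where "etr (Ev a t M) = t"
fun ein :: "('a, 's) event \<Rightarrow> ('a, 's) cond set" where "ein (Ev a t M) = fset M"

fun clabel :: "('a, 's) cond \<Rightarrow> nat \<times> 's" where
  "clabel (C0 j s) = (j, s)"
| "clabel (Cout e j) = (j, snd (the (etr e j)))"

definition eout :: "('a, 's) event \<Rightarrow> ('a, 's) cond set" where
  "eout e = {Cout e j | j. etr e j \<noteq> None}"

definition preset :: "'s gvec \<Rightarrow> (nat \<times> 's) set" where
  "preset t = {(j, fst tr) | j tr. t j = Some tr}"

definition M0 :: "(nat \<Rightarrow> ('a, 's) lts) \<Rightarrow> nat \<Rightarrow> ('a, 's) cond set" where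
  "M0 A n = {C0 j (lts_init (A j)) | j. j < n}"

definition conds :: "(nat \<Rightarrow> ('a, 's) lts) \<Rightarrow> nat \<Rightarrow> ('a, 's) event set \<Rightarrow> ('a, 's) cond set" where
  "conds A n E = M0 A n \<union> (\<Union>e\<in>E. eout e)"

inductive reach :: "(nat \<Rightarrow> ('a, 's) lts) \<Rightarrow> nat \<Rightarrow> ('a, 's) event set \<Rightarrow> ('a, 's) cond set \<Rightarrow> bool"
  for A n E where
  "reach A n E (M0 A n)"
| "reach A n E K \<Longrightarrow> e \<in> E \<Longrightarrow> ein e \<subseteq> K \<Longrightarrow> reach A n E ((K - ein e) \<union> eout e)"

definition pext :: "(nat \<Rightarrow> ('a, 's) lts) \<Rightarrow> nat \<Rightarrow> ('a, 's) event set \<Rightarrow> ('a, 's) event \<Rightarrow> bool" where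
  "pext A n E e \<longleftrightarrow> e \<notin> E \<and> (eact e, etr e) \<in> gtrans A n
     \<and> (\<exists>K. reach A n E K \<and> ein e \<subseteq> K) \<and> clabel ` ein e = preset (etr e)"

inductive bp :: "(nat \<Rightarrow> ('a, 's) lts) \<Rightarrow> nat \<Rightarrow> ('a, 's) event set \<Rightarrow> bool" for A n where
  "bp A n {}"
| "bp A n E \<Longrightarrow> pext A n E e \<Longrightarrow> bp A n (insert e E)"

definition dpred :: "(('a, 's) event \<times> ('a, 's) event) set" where
  "dpred = {(e', e). \<exists>j. Cout e' j \<in> ein e}"

definition causal_less :: "('a, 's) event \<Rightarrow> ('a, 's) event \<Rightarrow> bool" where
  "causal_less e' e \<longleftrightarrow> (e', e) \<in> dpred\<^sup>+"

definition past :: "('a, 's) event \<Rightarrow> ('a, 's) event set" where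
  "past e = {e'. (e', e) \<in> dpred\<^sup>*}"

text \<open>M(e): the marking reached by firing exactly the events of the past of e.\<close>
definition Mark :: "(nat \<Rightarrow> ('a, 's) lts) \<Rightarrow> nat \<Rightarrow> ('a, 's) event \<Rightarrow> ('a, 's) cond set" where
  "Mark A n e = (M0 A n \<union> (\<Union>x\<in>past e. eout x)) - (\<Union>x\<in>past e. ein x)"

definition Mj :: "(nat \<Rightarrow> ('a, 's) lts) \<Rightarrow> nat \<Rightarrow> ('a, 's) event \<Rightarrow> nat \<Rightarrow> ('a, 's) cond" where
  "Mj A n e j = (THE b. b \<in> Mark A n e \<and> fst (clabel b) = j)"

definition St :: "(nat \<Rightarrow> ('a, 's) lts) \<Rightarrow> nat \<Rightarrow> ('a, 's) event \<Rightarrow> nat \<Rightarrow> 's" where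
  "St A n e = (\<lambda>j. if j < n then snd (clabel (Mj A n e j)) else undefined)"

definition ievent :: "nat \<Rightarrow> ('a, 's) event \<Rightarrow> bool" where
  "ievent i e \<longleftrightarrow> etr e i \<noteq> None"

text \<open>State: events added so far, and the set of pairs (cut-off, chosen companion).\<close>
type_synonym ('a, 's) alg_state = "('a, 's) event set \<times> (('a, 's) event \<times> ('a, 's) event) set"

definition allowed_ext :: "(nat \<Rightarrow> ('a, 's) lts) \<Rightarrow> nat \<Rightarrow> ('a, 's) alg_state \<Rightarrow> ('a, 's) event \<Rightarrow> bool" where
  "allowed_ext A n s e \<longleftrightarrow> pext A n (fst s) e \<and> (\<forall>e'. causal_less e' e \<longrightarrow> e' \<notin> fst ` snd s)"

definition is_companion :: "(nat \<Rightarrow> ('a, 's) lts) \<Rightarrow> nat \<Rightarrow> nat \<Rightarrow> ('a, 's) event set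
    \<Rightarrow> ('a, 's) event \<Rightarrow> ('a, 's) event \<Rightarrow> bool" where
  "is_companion A n i E e e' \<longleftrightarrow> ievent i e \<and> e' \<in> E \<and> e' \<noteq> e \<and> ievent i e' \<and> St A n e = St A n e'"

definition alg_step :: "(nat \<Rightarrow> ('a, 's) lts) \<Rightarrow> nat \<Rightarrow> nat \<Rightarrow> ('a, 's) alg_state \<Rightarrow> ('a, 's) alg_state \<Rightarrow> bool" where
  "alg_step A n i s s' \<longleftrightarrow> (\<exists>e. allowed_ext A n s e \<and> fst s' = insert e (fst s) \<and>
      ((\<not> (\<exists>e'. is_companion A n i (fst s) e e') \<and> snd s' = snd s)
       \<or> (\<exists>e'. is_companion A n i (fst s) e e' \<and> snd s' = insert (e, e') (snd s))))"

definition alg_terminated :: "(nat \<Rightarrow> ('a, 's) lts) \<Rightarrow> nat \<Rightarrow> ('a, 's) alg_state \<Rightarrow> bool" where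
  "alg_terminated A n s \<longleftrightarrow> \<not> (\<exists>e. allowed_ext A n s e)"

definition iconds :: "(nat \<Rightarrow> ('a, 's) lts) \<Rightarrow> nat \<Rightarrow> nat \<Rightarrow> ('a, 's) event set \<Rightarrow> ('a, 's) cond set" where
  "iconds A n i E = {b \<in> conds A n E. fst (clabel b) = i}"

definition Ntrans :: "nat \<Rightarrow> ('a, 's) event set \<Rightarrow> (('a, 's) cond \<times> 'a \<times> ('a, 's) cond) set" where
  "Ntrans i E = {(b, eact e, Cout e i) | e b. e \<in> E \<and> ievent i e \<and> b \<in> ein e \<and> fst (clabel b) = i}"

definition foldeq :: "(nat \<Rightarrow> ('a, 's) lts) \<Rightarrow> nat \<Rightarrow> nat \<Rightarrow> ('a, 's) alg_state \<Rightarrow> (('a, 's) cond \<times> ('a, 's) cond) set" where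
  "foldeq A n i s =
     (let R = {(Mj A n e i, Mj A n e' i) | e e'. (e, e') \<in> snd s}
      in (Id_on (iconds A n i (fst s)) \<union> R \<union> R\<inverse>)\<^sup>*)"

definition fold_step :: "(nat \<Rightarrow> ('a, 's) lts) \<Rightarrow> nat \<Rightarrow> nat \<Rightarrow> ('a, 's) alg_state
    \<Rightarrow> ('a, 's) cond set \<Rightarrow> 'a \<Rightarrow> ('a, 's) cond set \<Rightarrow> bool" where
  "fold_step A n i s X a Y \<longleftrightarrow>
     (\<exists>b b'. (b, a, b') \<in> Ntrans i (fst s) \<and> X = foldeq A n i s `` {b} \<and> Y = foldeq A n i s `` {b'})"

definition TrFold :: "(nat \<Rightarrow> ('a, 's) lts) \<Rightarrow> nat \<Rightarrow> nat \<Rightarrow> ('a, 's) alg_state \<Rightarrow> 'a trace set" where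
  "TrFold A n i s = traces_of (foldeq A n i s `` {C0 i (lts_init (A i))}) (fold_step A n i s)"

end

theory Submission
  imports Defs
begin

lemma wf_dpred: "wf dpred"
proof (rule wfUNIVI)
  fix P :: "('a,'s) event \<Rightarrow> bool" and x
  assume H: "\<forall>x. (\<forall>y. (y, x) \<in> dpred \<longrightarrow> P y) \<longrightarrow> P x"
  have "(\<forall>e j. c = Cout e j \<longrightarrow> P e) \<and> P x" for c
  proof (rule cond_event.induct[of "\<lambda>c. \<forall>e j. c = Cout e j \<longrightarrow> P e" P])
    fix x1 x2 x3
    assume IH: "\<And>c. c |\<in>| x3 \<Longrightarrow> \<forall>e j. c = Cout e j \<longrightarrow> P e"
    show "P (Ev x1 x2 x3)"
    proof (rule H[rule_format])
      fix y assume "(y, Ev x1 x2 x3) \<in> dpred"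
      then obtain j where "Cout y j |\<in>| x3" by (auto simp: dpred_def)
      with IH show "P y" by blast
    qed
  qed simp_all
  then show "P x" by blast
qed

lemma dpred_iff: "(x, e) \<in> dpred \<longleftrightarrow> (\<exists>j. Cout x j \<in> ein e)"
  by (simp add: dpred_def)

lemma dpred_trancl_irrefl: "(x, x) \<notin> dpred\<^sup>+"
  by (rule wf_not_refl[OF wf_trancl[OF wf_dpred]])

lemma dpred_trancl_asym: "(x, y) \<in> dpred\<^sup>+ \<Longrightarrow> (y, x) \<notin> dpred\<^sup>*"
  using dpred_trancl_irrefl by (metis trancl_rtrancl_trancl)

lemma Cout_not_in_own: "Cout e j \<notin> ein e"
proof
  assume "Cout e j \<in> ein e"
  then have "(e, e) \<in> dpred" by (auto simp: dpred_iff)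
  then show False using dpred_trancl_irrefl by blast
qed

lemma eout_iff: "c \<in> eout e \<longleftrightarrow> (\<exists>j. c = Cout e j \<and> etr e j \<noteq> None)"
  by (auto simp: eout_def)

lemma Cout_eout: "Cout x j \<in> eout e \<longleftrightarrow> x = e \<and> etr e j \<noteq> None"
  by (auto simp: eout_def)

lemma C0_eout: "C0 j s \<notin> eout e"
  by (auto simp: eout_def)

fun lpath :: "('g \<Rightarrow> 'b \<Rightarrow> 'g \<Rightarrow> bool) \<Rightarrow> 'g \<Rightarrow> 'b list \<Rightarrow> 'g \<Rightarrow> bool" where
  "lpath st g [] g' = (g = g')"
| "lpath st g (a # as) g'' = (\<exists>g'. st g a g' \<and> lpath st g' as g'')"

lemma lpath_append: "lpath st g (xs @ ys) g'' \<longleftrightarrow> (\<exists>g'. lpath st g xs g' \<and> lpath st g' ys g'')"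
  by (induction xs arbitrary: g) auto

lemma lpath_snoc: "lpath st g (xs @ [a]) g'' \<longleftrightarrow> (\<exists>g'. lpath st g xs g' \<and> st g' a g'')"
  by (simp add: lpath_append)

lemma Cout_M0: "Cout x j \<notin> M0 A n"
  by (auto simp: M0_def)

locale sys =
  fixes A :: "nat \<Rightarrow> ('a, 's) lts" and n :: nat
begin

definition wfe :: "('a,'s) event \<Rightarrow> bool" where
  "wfe e \<longleftrightarrow> (eact e, etr e) \<in> gtrans A n \<and> clabel ` ein e = preset (etr e)"

definition OS :: "('a,'s) event set \<Rightarrow> ('a,'s) cond set" where
  "OS S = \<Union>(eout ` S)"
definition IS :: "('a,'s) event set \<Rightarrow> ('a,'s) cond set" where
  "IS S = \<Union>(ein ` S)"

definition mkS :: "('a,'s) event set \<Rightarrow> ('a,'s) cond set" where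
  "mkS S = (M0 A n \<union> OS S) - IS S"

definition config :: "('a,'s) event set \<Rightarrow> bool" where
  "config S \<longleftrightarrow> finite S \<and> (\<forall>e\<in>S. wfe e) \<and> (\<forall>e\<in>S. ein e \<subseteq> M0 A n \<union> OS S)
     \<and> (\<forall>e\<in>S. \<forall>e'\<in>S. e \<noteq> e' \<longrightarrow> ein e \<inter> ein e' = {})"

definition fire :: "('a,'s) cond set \<Rightarrow> ('a,'s) event \<Rightarrow> ('a,'s) cond set" where
  "fire K e = (K - ein e) \<union> eout e"

fun fseq :: "('a,'s) cond set \<Rightarrow> ('a,'s) event list \<Rightarrow> bool" where
  "fseq K [] = True"
| "fseq K (e # es) = (ein e \<subseteq> K \<and> fseq (fire K e) es)"

definition mk :: "('a,'s) cond set \<Rightarrow> ('a,'s) event list \<Rightarrow> ('a,'s) cond set" where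
  "mk K es = foldl fire K es"

lemma mk_Nil[simp]: "mk K [] = K" by (simp add: mk_def)
lemma mk_Cons[simp]: "mk K (e # es) = mk (fire K e) es" by (simp add: mk_def)
lemma mk_snoc[simp]: "mk K (es @ [e]) = fire (mk K es) e" by (simp add: mk_def)
lemma mk_append: "mk K (xs @ ys) = mk (mk K xs) ys" by (simp add: mk_def)

lemma fseq_snoc[simp]: "fseq K (es @ [e]) \<longleftrightarrow> fseq K es \<and> ein e \<subseteq> mk K es"
  by (induction es arbitrary: K) auto

lemma fseq_append: "fseq K (xs @ ys) \<longleftrightarrow> fseq K xs \<and> fseq (mk K xs) ys"
  by (induction xs arbitrary: K) auto

definition iscut :: "('a,'s) cond set \<Rightarrow> bool" where
  "iscut K \<longleftrightarrow> (\<forall>b\<in>K. fst (clabel b) < n) \<and> (\<forall>j<n. \<exists>!b. b \<in> K \<and> fst (clabel b) = j)"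

definition jc :: "('a,'s) cond set \<Rightarrow> nat \<Rightarrow> ('a,'s) cond" where
  "jc K j = (THE b. b \<in> K \<and> fst (clabel b) = j)"

definition gst :: "('a,'s) cond set \<Rightarrow> nat \<Rightarrow> 's" where
  "gst K j = (if j < n then snd (clabel (jc K j)) else lts_init (A j))"

lemma jc_prop: "iscut K \<Longrightarrow> j < n \<Longrightarrow> jc K j \<in> K \<and> fst (clabel (jc K j)) = j"
proof -
  assume "iscut K" "j < n"
  then have "\<exists>!b. b \<in> K \<and> fst (clabel b) = j" by (simp add: iscut_def)
  then show ?thesis unfolding jc_def by (rule theI')
qed

lemma jc_eq: "iscut K \<Longrightarrow> b \<in> K \<Longrightarrow> fst (clabel b) = j \<Longrightarrow> jc K j = b"
proof -
  assume a: "iscut K" "b \<in> K" "fst (clabel b) = j"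
  then have "j < n" by (auto simp: iscut_def)
  with a have "\<exists>!b. b \<in> K \<and> fst (clabel b) = j" by (simp add: iscut_def)
  then show ?thesis unfolding jc_def using a by (simp add: the1_equality)
qed

lemma M0_iff: "c \<in> M0 A n \<longleftrightarrow> (\<exists>j<n. c = C0 j (lts_init (A j)))"
  by (auto simp: M0_def)

lemma cut_M0: "iscut (M0 A n)"
  unfolding iscut_def
proof (intro conjI ballI allI impI)
  fix b assume "b \<in> M0 A n" then show "fst (clabel b) < n" by (auto simp: M0_iff)
next
  fix j assume "j < n"
  show "\<exists>!b. b \<in> M0 A n \<and> fst (clabel b) = j"
  proof (rule ex1I[of _ "C0 j (lts_init (A j))"])
    show "C0 j (lts_init (A j)) \<in> M0 A n \<and> fst (clabel (C0 j (lts_init (A j)))) = j"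
      using \<open>j < n\<close> by (auto simp: M0_iff)
  next
    fix b assume "b \<in> M0 A n \<and> fst (clabel b) = j"
    then show "b = C0 j (lts_init (A j))" by (auto simp: M0_iff)
  qed
qed

lemma gst_M0: "gst (M0 A n) = ginit A"
proof
  fix j show "gst (M0 A n) j = ginit A j"
  proof (cases "j < n")
    case True
    have "jc (M0 A n) j = C0 j (lts_init (A j))"
      using True by (intro jc_eq[OF cut_M0]) (auto simp: M0_def)
    then show ?thesis using True by (simp add: gst_def ginit_def)
  qed (simp add: gst_def ginit_def)
qed


lemma OS_insert[simp]: "OS (insert e S) = eout e \<union> OS S" by (auto simp: OS_def)
lemma IS_insert[simp]: "IS (insert e S) = ein e \<union> IS S" by (auto simp: IS_def)
lemma OS_empty[simp]: "OS {} = {}" by (simp add: OS_def)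
lemma IS_empty[simp]: "IS {} = {}" by (simp add: IS_def)
lemma mkS_empty[simp]: "mkS {} = M0 A n" by (simp add: mkS_def)
lemma Cout_OS: "Cout x j \<in> OS S \<longleftrightarrow> x \<in> S \<and> etr x j \<noteq> None"
  by (auto simp: OS_def Cout_eout)
lemma C0_OS: "C0 j s \<notin> OS S"
  by (auto simp: OS_def C0_eout)
lemma IS_iff: "c \<in> IS S \<longleftrightarrow> (\<exists>e\<in>S. c \<in> ein e)" by (auto simp: IS_def)

lemma wfe_gtrans: "wfe e \<Longrightarrow> (eact e, etr e) \<in> gtrans A n"
  by (simp add: wfe_def)

lemma wfe_lt: "wfe e \<Longrightarrow> etr e j \<noteq> None \<Longrightarrow> j < n"
  unfolding wfe_def gtrans_def by (cases "j < n") auto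

lemma wfe_ein_ne: "wfe e \<Longrightarrow> ein e \<noteq> {}"
proof
  assume w: "wfe e" and em: "ein e = {}"
  from w obtain j tr where "etr e j = Some tr" unfolding wfe_def gtrans_def by blast
  then have "(j, fst tr) \<in> preset (etr e)" by (cases tr) (auto simp: preset_def)
  with w em show False by (simp add: wfe_def)
qed

lemma wfe_ein_label: "wfe e \<Longrightarrow> c \<in> ein e \<Longrightarrow> \<exists>tr. etr e (fst (clabel c)) = Some tr \<and> snd (clabel c) = fst tr"
proof -
  assume w: "wfe e" and c: "c \<in> ein e"
  then have "clabel c \<in> preset (etr e)" by (auto simp: wfe_def)
  then show ?thesis by (auto simp: preset_def)
qed

lemma wfe_preset: "wfe e \<Longrightarrow> etr e j = Some tr \<Longrightarrow> \<exists>c\<in>ein e. clabel c = (j, fst tr)"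
proof -
  assume w: "wfe e" and t: "etr e j = Some tr"
  then have "(j, fst tr) \<in> preset (etr e)" by (cases tr) (auto simp: preset_def)
  then have "(j, fst tr) \<in> clabel ` ein e" using w by (simp add: wfe_def)
  then show ?thesis by auto
qed

lemma clabel_Cout: "clabel (Cout e j) = (j, snd (the (etr e j)))" by simp

lemma wfe_finite_eout: "wfe e \<Longrightarrow> finite (eout e)"
proof -
  assume w: "wfe e"
  have "eout e \<subseteq> (\<lambda>j. Cout e j) ` {..<n}"
    using wfe_lt[OF w] by (auto simp: eout_def)
  then show ?thesis by (rule finite_subset) simp
qed

lemma config_closed: "config S \<Longrightarrow> e \<in> S \<Longrightarrow> (x, e) \<in> dpred \<Longrightarrow> x \<in> S"
proof -
  assume c: "config S" and e: "e \<in> S" and d: "(x, e) \<in> dpred"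
  then obtain j where "Cout x j \<in> ein e" by (auto simp: dpred_iff)
  moreover have "ein e \<subseteq> M0 A n \<union> OS S" using c e by (simp add: config_def)
  ultimately show ?thesis by (auto simp: Cout_OS Cout_M0)
qed

lemma config_past: "config S \<Longrightarrow> e \<in> S \<Longrightarrow> past e \<subseteq> S"
proof
  fix x assume c: "config S" and e: "e \<in> S" and x: "x \<in> past e"
  from x have "(x, e) \<in> dpred\<^sup>*" by (simp add: past_def)
  then show "x \<in> S"
  proof (induction rule: converse_rtrancl_induct)
    case base then show ?case using e .
  next
    case (step y z) then show ?case using config_closed[OF c] by blast
  qed
qed

lemma past_self: "e \<in> past e" by (simp add: past_def)

lemma past_closed: "x \<in> past e \<Longrightarrow> (z, x) \<in> dpred \<Longrightarrow> z \<in> past e"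
  by (auto simp: past_def intro: converse_rtrancl_into_rtrancl)

lemma past_mono: "x \<in> past e \<Longrightarrow> past x \<subseteq> past e"
  by (auto simp: past_def)

lemma config_sub: "config S \<Longrightarrow> P \<subseteq> S \<Longrightarrow> (\<forall>e\<in>P. \<forall>x. (x, e) \<in> dpred \<longrightarrow> x \<in> P) \<Longrightarrow> config P"
proof -
  assume c: "config S" and sub: "P \<subseteq> S" and cl: "\<forall>e\<in>P. \<forall>x. (x, e) \<in> dpred \<longrightarrow> x \<in> P"
  have inp: "ein e \<subseteq> M0 A n \<union> OS P" if "e \<in> P" for e
  proof
    fix c' assume c': "c' \<in> ein e"
    have "c' \<in> M0 A n \<union> OS S" using c c' that sub by (auto simp: config_def)
    then show "c' \<in> M0 A n \<union> OS P"
    proof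
      assume "c' \<in> OS S"
      then obtain y j where y: "y \<in> S" "c' = Cout y j" "etr y j \<noteq> None"
        by (auto simp: OS_def eout_def)
      then have "(y, e) \<in> dpred" using c' by (auto simp: dpred_iff)
      then have "y \<in> P" using cl that by blast
      then show ?thesis using y by (simp add: Cout_OS)
    qed simp
  qed
  have fin: "finite P" using c sub finite_subset unfolding config_def by blast
  have w: "\<forall>e\<in>P. wfe e" using c sub unfolding config_def by blast
  have cf: "\<forall>e\<in>P. \<forall>e'\<in>P. e \<noteq> e' \<longrightarrow> ein e \<inter> ein e' = {}"
    using c sub unfolding config_def by blast
  show "config P" unfolding config_def using fin w inp cf by blast
qed

lemma config_past_config: "config S \<Longrightarrow> e \<in> S \<Longrightarrow> config (past e)"
proof -
  assume c: "config S" and e: "e \<in> S"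
  show "config (past e)"
    by (rule config_sub[OF c config_past[OF c e]]) (auto intro: past_closed)
qed

lemma config_insert:
  assumes c: "config S" and w: "wfe e" and inp: "ein e \<subseteq> mkS S"
  shows "e \<notin> S \<and> config (insert e S) \<and> mkS (insert e S) = fire (mkS S) e"
proof -
  obtain c0 where c0: "c0 \<in> ein e" using wfe_ein_ne[OF w] by blast
  have ni: "e \<notin> S"
  proof
    assume "e \<in> S"
    then have "c0 \<in> IS S" using c0 by (auto simp: IS_iff)
    then show False using c0 inp by (auto simp: mkS_def)
  qed
  have disj: "ein e \<inter> IS S = {}" using inp by (auto simp: mkS_def)
  have cfg: "config (insert e S)"
    unfolding config_def
  proof (intro conjI ballI impI)
    show "finite (insert e S)" using c by (simp add: config_def)
  next
    fix x assume "x \<in> insert e S" then show "wfe x" using c w by (auto simp: config_def)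
  next
    fix x assume x: "x \<in> insert e S"
    show "ein x \<subseteq> M0 A n \<union> OS (insert e S)"
    proof (cases "x = e")
      case True then show ?thesis using inp by (auto simp: mkS_def)
    next
      case False then have "x \<in> S" using x by simp
      then show ?thesis using c by (auto simp: config_def)
    qed
  next
    fix x y assume x: "x \<in> insert e S" and y: "y \<in> insert e S" and ne: "x \<noteq> y"
    show "ein x \<inter> ein y = {}"
    proof (cases "x = e")
      case True
      then have "y \<in> S" using y ne by simp
      then show ?thesis using True disj by (auto simp: IS_def)
    next
      case False
      then have xs: "x \<in> S" using x by simp
      show ?thesis
      proof (cases "y = e")
        case True then show ?thesis using xs disj by (auto simp: IS_def)
      next
        case False then show ?thesis using xs y ne c by (auto simp: config_def)
      qed
    qed
  qed
  have o1: "eout e \<inter> ein e = {}" using Cout_not_in_own by (auto simp: eout_def)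
  have o2: "eout e \<inter> IS S = {}"
  proof (rule ccontr)
    assume "eout e \<inter> IS S \<noteq> {}"
    then obtain x j where x: "x \<in> S" "Cout e j \<in> ein x" by (auto simp: IS_iff eout_def)
    then have "(e, x) \<in> dpred" by (auto simp: dpred_iff)
    then have "e \<in> S" using config_closed[OF c x(1)] by blast
    then show False using ni by simp
  qed
  have "mkS (insert e S) = fire (mkS S) e"
    using o1 o2 by (auto simp: mkS_def fire_def)
  then show ?thesis using ni cfg by simp
qed

lemma fseq_config:
  "config S \<Longrightarrow> fseq (mkS S) \<rho> \<Longrightarrow> \<forall>e\<in>set \<rho>. wfe e \<Longrightarrow>
    config (S \<union> set \<rho>) \<and> S \<inter> set \<rho> = {} \<and> distinct \<rho> \<and> mk (mkS S) \<rho> = mkS (S \<union> set \<rho>)"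
proof (induction \<rho> arbitrary: S)
  case Nil then show ?case by simp
next
  case (Cons e \<rho>)
  have ins: "e \<notin> S \<and> config (insert e S) \<and> mkS (insert e S) = fire (mkS S) e"
    using config_insert[of S e] Cons.prems by simp
  then have "fseq (mkS (insert e S)) \<rho>" using Cons.prems by simp
  then have IH: "config (insert e S \<union> set \<rho>) \<and> insert e S \<inter> set \<rho> = {} \<and> distinct \<rho> \<and>
      mk (mkS (insert e S)) \<rho> = mkS (insert e S \<union> set \<rho>)"
    using Cons.IH[of "insert e S"] ins Cons.prems by simp
  then show ?case using ins by auto
qed

lemma config_empty: "config {}" by (simp add: config_def)

lemma linearize:
  assumes "config P" "config Q" "P \<subseteq> Q"
  shows "\<exists>\<rho>. set \<rho> = Q - P \<and> distinct \<rho> \<and> fseq (mkS P) \<rho> \<and> mk (mkS P) \<rho> = mkS Q"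
  using assms
proof (induction "card (Q - P)" arbitrary: P)
  case 0
  have "finite (Q - P)" using 0 by (simp add: config_def)
  then have "Q - P = {}" using 0(1) card_0_eq by metis
  then have "Q = P" using 0 by blast
  then show ?case by (intro exI[of _ "[]"]) simp
next
  case (Suc k)
  then have "Q - P \<noteq> {}" by auto
  then obtain x where "x \<in> Q - P" by blast
  then obtain m where m: "m \<in> Q - P" and mmin: "\<And>y. (y, m) \<in> dpred \<Longrightarrow> y \<notin> Q - P"
    using wfE_min[OF wf_dpred] by metis
  have wm: "wfe m" using m Suc.prems by (auto simp: config_def)
  have inp: "ein m \<subseteq> mkS P"
  proof
    fix c assume c: "c \<in> ein m"
    have "c \<in> M0 A n \<union> OS Q" using c m Suc.prems by (auto simp: config_def)
    then have "c \<in> M0 A n \<union> OS P"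
    proof
      assume "c \<in> OS Q"
      then obtain y j where y: "y \<in> Q" "c = Cout y j" "etr y j \<noteq> None"
        by (auto simp: OS_def eout_def)
      then have "(y, m) \<in> dpred" using c by (auto simp: dpred_iff)
      then have "y \<in> P" using mmin y by blast
      then show ?thesis using y by (simp add: Cout_OS)
    qed simp
    moreover have "c \<notin> IS P"
    proof
      assume "c \<in> IS P"
      then obtain y where y: "y \<in> P" "c \<in> ein y" by (auto simp: IS_iff)
      then have "y \<noteq> m" using m by auto
      have cf: "\<forall>e\<in>Q. \<forall>e'\<in>Q. e \<noteq> e' \<longrightarrow> ein e \<inter> ein e' = {}"
        using Suc.prems(2) unfolding config_def by blast
      have "y \<in> Q" "m \<in> Q" using y Suc.prems(3) m by auto
      then have "ein y \<inter> ein m = {}" using cf \<open>y \<noteq> m\<close> by blast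
      then show False using y c by blast
    qed
    ultimately show "c \<in> mkS P" by (simp add: mkS_def)
  qed
  have ins: "m \<notin> P \<and> config (insert m P) \<and> mkS (insert m P) = fire (mkS P) m"
    using config_insert[OF Suc.prems(1) wm inp] .
  have fQP: "finite (Q - P)" using Suc.prems(2) by (simp add: config_def)
  have eqd: "Q - insert m P = (Q - P) - {m}" by blast
  have card: "k = card (Q - insert m P)"
    unfolding eqd using card_Diff_singleton[OF m] Suc.hyps(2) by simp
  obtain \<rho> where r: "set \<rho> = Q - insert m P" "distinct \<rho>" "fseq (mkS (insert m P)) \<rho>"
      "mk (mkS (insert m P)) \<rho> = mkS Q"
    using Suc.hyps(1)[OF card] ins Suc.prems m by auto
  show ?case
    by (intro exI[of _ "m # \<rho>"]) (use r ins inp m in auto)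
qed

end

context sys begin

lemma fire_cut:
  assumes K: "iscut K" and w: "wfe e" and inp: "ein e \<subseteq> K"
  shows "iscut (fire K e) \<and> gmove (etr e) (gst K) (gst (fire K e))"
proof -
  have ltn: "\<And>j. etr e j \<noteq> None \<Longrightarrow> j < n" using wfe_lt[OF w] .
  have inlab: "\<And>c. c \<in> ein e \<Longrightarrow> etr e (fst (clabel c)) \<noteq> None"
    using wfe_ein_label[OF w] by fastforce
  have cutF: "iscut (fire K e)"
    unfolding iscut_def
  proof (intro conjI ballI allI impI)
    fix b assume "b \<in> fire K e"
    then show "fst (clabel b) < n"
    proof (unfold fire_def, elim UnE)
      assume "b \<in> K - ein e" then show ?thesis using K by (auto simp: iscut_def)
    next
      assume "b \<in> eout e" then show ?thesis using ltn by (auto simp: eout_def)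
    qed
  next
    fix j assume j: "j < n"
    show "\<exists>!b. b \<in> fire K e \<and> fst (clabel b) = j"
    proof (cases "etr e j")
      case None
      have jk: "jc K j \<in> K" "fst (clabel (jc K j)) = j" using jc_prop[OF K j] by auto
      have "jc K j \<notin> ein e" using inlab jk None by fastforce
      show ?thesis
      proof (rule ex1I[of _ "jc K j"])
        show "jc K j \<in> fire K e \<and> fst (clabel (jc K j)) = j"
          using jk \<open>jc K j \<notin> ein e\<close> by (simp add: fire_def)
      next
        fix b assume b: "b \<in> fire K e \<and> fst (clabel b) = j"
        show "b = jc K j"
        proof (cases "b \<in> eout e")
          case True then show ?thesis using b None by (auto simp: eout_def)
        next
          case False then have "b \<in> K" using b by (simp add: fire_def)
          then show ?thesis using jc_eq[OF K] b by simp
        qed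
      qed
    next
      case (Some tr)
      obtain c where c: "c \<in> ein e" "clabel c = (j, fst tr)" using wfe_preset[OF w Some] by blast
      show ?thesis
      proof (rule ex1I[of _ "Cout e j"])
        show "Cout e j \<in> fire K e \<and> fst (clabel (Cout e j)) = j"
          using Some by (simp add: fire_def Cout_eout)
      next
        fix b assume b: "b \<in> fire K e \<and> fst (clabel b) = j"
        show "b = Cout e j"
        proof (cases "b \<in> eout e")
          case True then show ?thesis using b by (auto simp: eout_def)
        next
          case False then have bK: "b \<in> K" "b \<notin> ein e" using b by (auto simp: fire_def)
          have "b = jc K j" using jc_eq[OF K bK(1)] b by simp
          moreover have "c = jc K j" using jc_eq[OF K] c inp by auto
          ultimately show ?thesis using c bK by simp
        qed
      qed
    qed
  qed
  have gm: "gmove (etr e) (gst K) (gst (fire K e))"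
    unfolding gmove_def
  proof
    fix j
    show "case etr e j of None \<Rightarrow> gst (fire K e) j = gst K j
          | Some (p, q) \<Rightarrow> gst K j = p \<and> gst (fire K e) j = q"
    proof (cases "j < n")
      case False
      then have "etr e j = None" using ltn by blast
      then show ?thesis using False by (simp add: gst_def)
    next
      case j: True
      show ?thesis
      proof (cases "etr e j")
        case None
        have jk: "jc K j \<in> K" "fst (clabel (jc K j)) = j" using jc_prop[OF K j] by auto
        have "jc K j \<notin> ein e" using inlab jk None by fastforce
        then have "jc K j \<in> fire K e" using jk by (simp add: fire_def)
        then have "jc (fire K e) j = jc K j" using jc_eq[OF cutF] jk by simp
        then show ?thesis using None by (simp add: gst_def)
      next
        case (Some tr)
        obtain p q where tr: "tr = (p, q)" by (cases tr)
        obtain c where c: "c \<in> ein e" "clabel c = (j, p)" using wfe_preset[OF w Some] tr by auto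
        have "jc K j = c" using jc_eq[OF K] c inp by auto
        moreover have "jc (fire K e) j = Cout e j"
          using jc_eq[OF cutF, of "Cout e j"] Some by (simp add: fire_def Cout_eout)
        ultimately show ?thesis using Some tr c j by (simp add: gst_def)
      qed
    qed
  qed
  show ?thesis using cutF gm by simp
qed

lemma fire_gstep: "iscut K \<Longrightarrow> wfe e \<Longrightarrow> ein e \<subseteq> K \<Longrightarrow> gstep A n (gst K) (eact e) (gst (fire K e))"
  using fire_cut wfe_gtrans unfolding gstep_def by blast

lemma fseq_exec:
  "iscut K \<Longrightarrow> fseq K \<rho> \<Longrightarrow> \<forall>e\<in>set \<rho>. wfe e \<Longrightarrow>
     iscut (mk K \<rho>) \<and> lpath (gstep A n) (gst K) (map eact \<rho>) (gst (mk K \<rho>))"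
proof (induction \<rho> arbitrary: K)
  case Nil then show ?case by simp
next
  case (Cons e \<rho>)
  have c: "iscut (fire K e)" using fire_cut Cons.prems by auto
  have s: "gstep A n (gst K) (eact e) (gst (fire K e))" using fire_gstep Cons.prems by auto
  show ?case using Cons.IH[OF c] Cons.prems s by auto
qed

lemma config_wfe: "config S \<Longrightarrow> e \<in> S \<Longrightarrow> wfe e" by (simp add: config_def)

lemma config_ext_exec:
  assumes "config P" "config Q" "P \<subseteq> Q"
  shows "\<exists>\<rho>. set \<rho> = Q - P \<and> distinct \<rho> \<and> iscut (mkS Q) \<and>
           lpath (gstep A n) (gst (mkS P)) (map eact \<rho>) (gst (mkS Q))"
proof -
  obtain \<rho> where r: "set \<rho> = Q - P" "distinct \<rho>" "fseq (mkS P) \<rho>" "mk (mkS P) \<rho> = mkS Q"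
    using linearize[OF assms] by blast
  have cP: "iscut (mkS P)"
  proof -
    obtain \<sigma> where s: "set \<sigma> = P" "fseq (mkS {}) \<sigma>" "mk (mkS {}) \<sigma> = mkS P"
      using linearize[OF config_empty assms(1)] by auto
    have "\<forall>e\<in>set \<sigma>. wfe e" using s assms(1) config_wfe by blast
    then show ?thesis using fseq_exec[of "M0 A n" \<sigma>] s cut_M0 by simp
  qed
  have "\<forall>e\<in>set \<rho>. wfe e" using r assms(2) config_wfe by blast
  then show ?thesis using fseq_exec[OF cP r(3)] r by auto
qed

lemma config_cut: "config S \<Longrightarrow> iscut (mkS S)"
  using config_ext_exec[OF config_empty, of S] by auto

lemma config_exec: "config S \<Longrightarrow> \<exists>\<rho>. set \<rho> = S \<and> distinct \<rho> \<and>
     lpath (gstep A n) (ginit A) (map eact \<rho>) (gst (mkS S))"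
  using config_ext_exec[OF config_empty, of S] by (auto simp: gst_M0)

lemma Mark_eq: "Mark A n e = mkS (past e)"
  by (simp add: Mark_def mkS_def OS_def IS_def)

lemma Mj_eq: "Mj A n e j = jc (Mark A n e) j"
  by (simp add: Mj_def jc_def)

lemma St_eq_iff: "St A n e = St A n e' \<longleftrightarrow> gst (Mark A n e) = gst (Mark A n e')"
proof
  assume h: "St A n e = St A n e'"
  show "gst (Mark A n e) = gst (Mark A n e')"
  proof
    fix j
    show "gst (Mark A n e) j = gst (Mark A n e') j"
    proof (cases "j < n")
      case True
      have "St A n e j = St A n e' j" using h by simp
      then show ?thesis using True by (simp add: St_def gst_def Mj_eq)
    qed (simp add: gst_def)
  qed
next
  assume h: "gst (Mark A n e) = gst (Mark A n e')"
  show "St A n e = St A n e'"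
  proof
    fix j
    show "St A n e j = St A n e' j"
    proof (cases "j < n")
      case True
      have "gst (Mark A n e) j = gst (Mark A n e') j" using h by simp
      then show ?thesis using True by (simp add: St_def gst_def Mj_eq)
    qed (simp add: St_def)
  qed
qed

lemma Cout_in_Mark:
  assumes "etr e j \<noteq> None"
  shows "Cout e j \<in> Mark A n e"
proof -
  have o: "Cout e j \<in> OS (past e)" using assms past_self by (simp add: Cout_OS)
  have "Cout e j \<notin> IS (past e)"
  proof
    assume "Cout e j \<in> IS (past e)"
    then obtain x where x: "x \<in> past e" "Cout e j \<in> ein x" by (auto simp: IS_iff)
    then have "(e, x) \<in> dpred" by (auto simp: dpred_iff)
    moreover have "(x, e) \<in> dpred\<^sup>*" using x by (simp add: past_def)
    ultimately have "(e, e) \<in> dpred\<^sup>+" by (meson rtrancl_into_trancl2)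
    then show False using dpred_trancl_irrefl by blast
  qed
  then show ?thesis using o by (simp add: Mark_eq mkS_def)
qed

lemma Mj_icond:
  assumes "config (past e)" "etr e j \<noteq> None" "j < n"
  shows "Mj A n e j = Cout e j"
proof -
  have "iscut (Mark A n e)" using config_cut assms(1) by (simp add: Mark_eq)
  then show ?thesis using jc_eq Cout_in_Mark[OF assms(2)] by (simp add: Mj_eq)
qed

lemma jc_fire_other:
  assumes K: "iscut K" and w: "wfe e" and inp: "ein e \<subseteq> K" and j: "j < n" and N: "etr e j = None"
  shows "jc (fire K e) j = jc K j"
proof -
  have jk: "jc K j \<in> K" "fst (clabel (jc K j)) = j" using jc_prop[OF K j] by auto
  have "jc K j \<notin> ein e" using wfe_ein_label[OF w] jk N by fastforce
  then have "jc K j \<in> fire K e" using jk by (simp add: fire_def)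
  then show ?thesis using jc_eq fire_cut[OF K w inp] jk by simp
qed

lemma jc_consumed:
  assumes K: "iscut K" and w: "wfe e" and inp: "ein e \<subseteq> K" and S: "etr e j = Some tr"
  shows "jc K j \<in> ein e"
proof -
  obtain c where c: "c \<in> ein e" "clabel c = (j, fst tr)" using wfe_preset[OF w S] by blast
  then have "jc K j = c" using jc_eq[OF K] inp by auto
  then show ?thesis using c by simp
qed

lemma ievent_act:
  assumes "wfe e" "j < n"
  shows "etr e j \<noteq> None \<longleftrightarrow> eact e \<in> lts_acts (A j)"
  using assms unfolding wfe_def gtrans_def by (auto split: if_splits)

lemma reach_config: "reach A n E K \<Longrightarrow> \<forall>e\<in>E. wfe e \<Longrightarrow> \<exists>S. config S \<and> S \<subseteq> E \<and> K = mkS S"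
proof (induction rule: reach.induct)
  case 1 then show ?case using config_empty by (intro exI[of _ "{}"]) simp
next
  case (2 K e)
  then obtain S where S: "config S" "S \<subseteq> E" "K = mkS S" by blast
  have w: "wfe e" using 2 by blast
  have "e \<notin> S \<and> config (insert e S) \<and> mkS (insert e S) = fire (mkS S) e"
    using config_insert[OF S(1) w] 2 S by simp
  then show ?case using S 2 by (intro exI[of _ "insert e S"]) (auto simp: fire_def)
qed

lemma fseq_reach: "reach A n E K \<Longrightarrow> fseq K \<rho> \<Longrightarrow> set \<rho> \<subseteq> E \<Longrightarrow> reach A n E (mk K \<rho>)"
proof (induction \<rho> arbitrary: K)
  case Nil then show ?case by simp
next
  case (Cons e \<rho>)
  have "reach A n E (fire K e)" unfolding fire_def
    using reach.intros(2)[OF Cons.prems(1)] Cons.prems by simp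
  then show ?case using Cons by simp
qed

lemma config_reach: "config S \<Longrightarrow> S \<subseteq> E \<Longrightarrow> reach A n E (mkS S)"
proof -
  assume c: "config S" "S \<subseteq> E"
  obtain \<rho> where r: "set \<rho> = S" "fseq (mkS {}) \<rho>" "mk (mkS {}) \<rho> = mkS S"
    using linearize[OF config_empty c(1)] by auto
  show ?thesis using fseq_reach[of E "M0 A n" \<rho>] reach.intros(1) r c by auto
qed

end

locale alg = sys A n for A :: "nat \<Rightarrow> ('a, 's) lts" and n :: nat +
  fixes i :: nat
begin

definition Rc :: "(('a,'s) event \<times> ('a,'s) event) set \<Rightarrow> (('a,'s) cond \<times> ('a,'s) cond) set" where
  "Rc cp = {(Cout c i, Cout c' i) | c c'. (c, c') \<in> cp}"

definition inv :: "('a,'s) event set \<Rightarrow> (('a,'s) event \<times> ('a,'s) event) set \<Rightarrow> bool" where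
  "inv E cp \<longleftrightarrow> finite E \<and> bp A n E
    \<and> (\<forall>e\<in>E. wfe e \<and> config (past e) \<and> past e \<subseteq> E)
    \<and> (\<forall>p\<in>cp. fst p \<in> E \<and> snd p \<in> E \<and> ievent i (fst p) \<and> ievent i (snd p) \<and> St A n (fst p) = St A n (snd p))
    \<and> (\<forall>e\<in>E. \<forall>x. causal_less x e \<longrightarrow> x \<notin> fst ` cp)
    \<and> (\<forall>x\<in>E. \<forall>y\<in>E. x \<notin> fst ` cp \<longrightarrow> y \<notin> fst ` cp \<longrightarrow> ievent i x \<longrightarrow> ievent i y
          \<longrightarrow> St A n x = St A n y \<longrightarrow> x = y)
    \<and> (\<forall>c\<in>fst ` cp. \<exists>c'\<in>E. c' \<notin> fst ` cp \<and> ievent i c' \<and> St A n c' = St A n c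
          \<and> (Cout c i, Cout c' i) \<in> (Rc cp \<union> (Rc cp)\<inverse>)\<^sup>*)"

lemma inv_init: "inv {} {}"
  by (simp add: inv_def bp.intros(1))

lemma causal_less_past: "causal_less x e \<Longrightarrow> x \<in> past e"
  by (auto simp: causal_less_def past_def)

lemma inv_step:
  assumes I: "inv E cp" and st: "alg_step A n i (E, cp) s'"
  shows "inv (fst s') (snd s') \<and> (\<exists>e. e \<notin> E \<and> fst s' = insert e E)"
proof -
  from st obtain e where ae: "allowed_ext A n (E, cp) e" and E': "fst s' = insert e E"
    and cases: "(\<not> (\<exists>e'. is_companion A n i E e e') \<and> snd s' = cp)
       \<or> (\<exists>e'. is_companion A n i E e e' \<and> snd s' = insert (e, e') cp)"
    unfolding alg_step_def by auto
  from ae have pe: "pext A n E e" and nopred: "\<forall>x. causal_less x e \<longrightarrow> x \<notin> fst ` cp"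
    unfolding allowed_ext_def by auto
  from pe have eE: "e \<notin> E" and w: "wfe e" and rK: "\<exists>K. reach A n E K \<and> ein e \<subseteq> K"
    unfolding pext_def wfe_def by auto
  have wE: "\<forall>x\<in>E. wfe x" using I by (simp add: inv_def)
  from rK obtain K where K: "reach A n E K" "ein e \<subseteq> K" by blast
  obtain S where S: "config S" "S \<subseteq> E" "K = mkS S" using reach_config[OF K(1) wE] by blast
  have ins: "e \<notin> S \<and> config (insert e S) \<and> mkS (insert e S) = fire (mkS S) e"
    using config_insert[OF S(1) w] K S by simp
  have pastsub: "past e \<subseteq> insert e S" using config_past[of "insert e S" e] ins by simp
  have cpe: "config (past e)" using config_past_config[of "insert e S" e] ins by simp
  have fin: "finite (insert e E)" using I by (simp add: inv_def)
  have bp0: "bp A n E" using I by (simp add: inv_def)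
  have bpE: "bp A n (insert e E)" by (rule bp.intros(2)[OF bp0 pe])
  have evs: "\<forall>x\<in>insert e E. wfe x \<and> config (past x) \<and> past x \<subseteq> insert e E"
    using I w cpe pastsub S(2) by (auto simp: inv_def)
  have eNotPast: "x \<in> E \<Longrightarrow> e \<notin> past x" for x
    using I eE by (auto simp: inv_def)
  have trcl: "causal_less x e \<Longrightarrow> x \<noteq> e" for x
    using dpred_trancl_irrefl by (auto simp: causal_less_def)
  let ?C = "fst ` cp"
  show ?thesis
  proof (cases "\<exists>e'. is_companion A n i E e e'")
    case False
    then have cp': "snd s' = cp" using cases by auto
    have pairs: "\<forall>p\<in>cp. fst p \<in> insert e E \<and> snd p \<in> insert e E \<and> ievent i (fst p) \<and> ievent i (snd p)
        \<and> St A n (fst p) = St A n (snd p)" using I by (auto simp: inv_def)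
    have preds: "\<forall>x\<in>insert e E. \<forall>y. causal_less y x \<longrightarrow> y \<notin> ?C"
      using I nopred by (auto simp: inv_def)
    have dist: "\<forall>x\<in>insert e E. \<forall>y\<in>insert e E. x \<notin> ?C \<longrightarrow> y \<notin> ?C \<longrightarrow> ievent i x \<longrightarrow> ievent i y
          \<longrightarrow> St A n x = St A n y \<longrightarrow> x = y"
    proof (intro ballI impI)
      fix x y assume x: "x \<in> insert e E" and y: "y \<in> insert e E" and nx: "x \<notin> ?C" and ny: "y \<notin> ?C"
        and ix: "ievent i x" and iy: "ievent i y" and st: "St A n x = St A n y"
      show "x = y"
      proof (cases "x = e")
        case True
        show ?thesis
        proof (rule ccontr)
          assume "x \<noteq> y"
          then have "y \<in> E" "y \<noteq> e" using y True by auto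
          then have "is_companion A n i E e y" using True ix iy st by (simp add: is_companion_def)
          then show False using False by blast
        qed
      next
        case xne: False
        show ?thesis
        proof (cases "y = e")
          case True
          have "x \<in> E" using x xne by simp
          then have "is_companion A n i E e x" using True xne ix iy st by (simp add: is_companion_def)
          then show ?thesis using False by blast
        next
          case False
          then show ?thesis using I x y xne nx ny ix iy st unfolding inv_def by auto
        qed
      qed
    qed
    have chain: "\<forall>c\<in>?C. \<exists>c'\<in>insert e E. c' \<notin> ?C \<and> ievent i c' \<and> St A n c' = St A n c
          \<and> (Cout c i, Cout c' i) \<in> (Rc cp \<union> (Rc cp)\<inverse>)\<^sup>*"
      using I unfolding inv_def by blast
    have "inv (insert e E) cp"
      unfolding inv_def using fin bpE evs pairs preds dist chain by blast
    then show ?thesis using E' cp' eE by auto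
  next
    case True
    then obtain e' where comp: "is_companion A n i E e e'" and cp': "snd s' = insert (e, e') cp"
      using cases by (auto simp: is_companion_def)
    from comp have ie: "ievent i e" and e'E: "e' \<in> E" and ie': "ievent i e'"
      and ste: "St A n e = St A n e'" by (auto simp: is_companion_def)
    let ?cp = "insert (e, e') cp"
    have C': "fst ` ?cp = insert e ?C" by simp
    have pairs: "\<forall>p\<in>?cp. fst p \<in> insert e E \<and> snd p \<in> insert e E \<and> ievent i (fst p) \<and> ievent i (snd p)
        \<and> St A n (fst p) = St A n (snd p)" using I ie ie' e'E ste by (auto simp: inv_def)
    have preds: "\<forall>x\<in>insert e E. \<forall>y. causal_less y x \<longrightarrow> y \<notin> fst ` ?cp"
    proof (intro ballI allI impI)
      fix x y assume x: "x \<in> insert e E" and cl: "causal_less y x"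
      show "y \<notin> fst ` ?cp"
      proof (cases "x = e")
        case True then show ?thesis using nopred cl trcl by auto
      next
        case False
        then have xE: "x \<in> E" using x by simp
        have "y \<notin> ?C" using I xE cl by (auto simp: inv_def)
        moreover have "y \<noteq> e" using eNotPast[OF xE] causal_less_past[OF cl] by auto
        ultimately show ?thesis by simp
      qed
    qed
    have dist: "\<forall>x\<in>insert e E. \<forall>y\<in>insert e E. x \<notin> fst ` ?cp \<longrightarrow> y \<notin> fst ` ?cp \<longrightarrow> ievent i x \<longrightarrow> ievent i y
          \<longrightarrow> St A n x = St A n y \<longrightarrow> x = y"
      using I unfolding inv_def C' by auto
    have Rcm: "Rc cp \<subseteq> Rc ?cp" by (auto simp: Rc_def)
    have mono: "(Rc cp \<union> (Rc cp)\<inverse>)\<^sup>* \<subseteq> (Rc ?cp \<union> (Rc ?cp)\<inverse>)\<^sup>*"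
      by (rule rtrancl_mono) (use Rcm in blast)
    have new: "(Cout e i, Cout e' i) \<in> Rc ?cp" by (auto simp: Rc_def)
    have chain: "\<forall>c\<in>fst ` ?cp. \<exists>c'\<in>insert e E. c' \<notin> fst ` ?cp \<and> ievent i c' \<and> St A n c' = St A n c
          \<and> (Cout c i, Cout c' i) \<in> (Rc ?cp \<union> (Rc ?cp)\<inverse>)\<^sup>*"
    proof
      fix c assume c: "c \<in> fst ` ?cp"
      show "\<exists>c'\<in>insert e E. c' \<notin> fst ` ?cp \<and> ievent i c' \<and> St A n c' = St A n c
          \<and> (Cout c i, Cout c' i) \<in> (Rc ?cp \<union> (Rc ?cp)\<inverse>)\<^sup>*"
      proof (cases "c = e")
        case False
        then have cC: "c \<in> ?C" using c by simp
        then obtain c' where c': "c' \<in> E" "c' \<notin> ?C" "ievent i c'" "St A n c' = St A n c"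
            "(Cout c i, Cout c' i) \<in> (Rc cp \<union> (Rc cp)\<inverse>)\<^sup>*"
          using I unfolding inv_def by blast
        have "c' \<noteq> e" using c' eE by auto
        then show ?thesis using c' mono by (intro bexI[of _ c']) auto
      next
        case True
        show ?thesis
        proof (cases "e' \<in> ?C")
          case False
          have "e' \<noteq> e" using e'E eE by auto
          then show ?thesis using True False e'E ie' ste new by (intro bexI[of _ e']) auto
        next
          case e'C: True
          then obtain c' where c': "c' \<in> E" "c' \<notin> ?C" "ievent i c'" "St A n c' = St A n e'"
              "(Cout e' i, Cout c' i) \<in> (Rc cp \<union> (Rc cp)\<inverse>)\<^sup>*"
            using I unfolding inv_def by blast
          have "c' \<noteq> e" using c' eE by auto
          moreover have "(Cout e i, Cout c' i) \<in> (Rc ?cp \<union> (Rc ?cp)\<inverse>)\<^sup>*"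
            using new c'(5) mono by (meson UnI1 converse_rtrancl_into_rtrancl subsetD)
          ultimately show ?thesis using True c' ste by (intro bexI[of _ c']) auto
        qed
      qed
    qed
    have "inv (insert e E) ?cp"
      unfolding inv_def using fin bpE evs pairs preds dist chain by blast
    then show ?thesis using E' cp' eE by auto
  qed
qed

lemma inv_reach: "(alg_step A n i)\<^sup>*\<^sup>* ({}, {}) s \<Longrightarrow> inv (fst s) (snd s)"
proof (induction rule: rtranclp_induct)
  case base then show ?case using inv_init by simp
next
  case (step y z)
  then show ?case using inv_step[of "fst y" "snd y" z] by simp
qed

end

lemma lpath_fun: "lpath st g xs g' \<Longrightarrow> \<exists>s. s 0 = g \<and> s (length xs) = g' \<and> (\<forall>k<length xs. st (s k) (xs ! k) (s (Suc k)))"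
proof (induction xs arbitrary: g)
  case Nil then show ?case by (intro exI[of _ "\<lambda>_. g"]) simp
next
  case (Cons a xs)
  then obtain g1 where g1: "st g a g1" "lpath st g1 xs g'" by auto
  then obtain s where s: "s 0 = g1" "s (length xs) = g'" "\<forall>k<length xs. st (s k) (xs ! k) (s (Suc k))"
    using Cons.IH by blast
  let ?s = "\<lambda>k. if k = 0 then g else s (k - 1)"
  have "\<forall>k<length (a # xs). st (?s k) ((a # xs) ! k) (?s (Suc k))"
  proof (intro allI impI)
    fix k assume k: "k < length (a # xs)"
    show "st (?s k) ((a # xs) ! k) (?s (Suc k))"
    proof (cases k)
      case 0 then show ?thesis using g1 s by simp
    next
      case (Suc k') then show ?thesis using s k by simp
    qed
  qed
  then show ?case using s by (intro exI[of _ ?s]) simp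
qed

lemma fun_lpath: "(\<forall>k<length xs. st (s k) (xs ! k) (s (Suc k))) \<Longrightarrow> lpath st (s 0) xs (s (length xs))"
proof (induction xs arbitrary: s)
  case Nil then show ?case by simp
next
  case (Cons a xs)
  have "lpath st ((\<lambda>k. s (Suc k)) 0) xs ((\<lambda>k. s (Suc k)) (length xs))"
    using Cons.prems by (intro Cons.IH) auto
  moreover have "st (s 0) a (s 1)" using Cons.prems by force
  ultimately show ?case by auto
qed

lemma fun_lpath_off:
  assumes "\<forall>k. a \<le> k \<and> k < b \<longrightarrow> st (s k) (w k) (s (Suc k))" "a \<le> b"
  shows "lpath st (s a) (map w [a..<b]) (s b)"
  using assms
proof (induction b)
  case 0 then show ?case by simp
next
  case (Suc b)
  show ?case
  proof (cases "a = Suc b")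
    case True then show ?thesis by simp
  next
    case False
    then have ab: "a \<le> b" using Suc.prems by simp
    then have "lpath st (s a) (map w [a..<b]) (s b)" using Suc by simp
    moreover have "st (s b) (w b) (s (Suc b))" using Suc.prems ab by simp
    moreover have "map w [a..<Suc b] = map w [a..<b] @ [w b]" using ab by simp
    ultimately show ?thesis unfolding lpath_snoc by (metis lpath_snoc)
  qed
qed

lemma traces_Fin: "Fin xs \<in> traces_of g0 st \<longleftrightarrow> (\<exists>g. lpath st g0 xs g)"
proof
  assume "Fin xs \<in> traces_of g0 st"
  then obtain s where "s 0 = g0" "\<forall>k<length xs. st (s k) (xs ! k) (s (Suc k))"
    by (auto simp: traces_of_def)
  then show "\<exists>g. lpath st g0 xs g" using fun_lpath by metis
next
  assume "\<exists>g. lpath st g0 xs g"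
  then show "Fin xs \<in> traces_of g0 st" using lpath_fun unfolding traces_of_def by fastforce
qed

lemma traces_Inf: "Inf w \<in> traces_of g0 st \<longleftrightarrow> (\<exists>s. s 0 = g0 \<and> (\<forall>k. st (s k) (w k) (s (Suc k))))"
  by (auto simp: traces_of_def)

lemma sim_lpath:
  assumes sim: "\<forall>x y a x'. R x y \<longrightarrow> st1 x a x' \<longrightarrow> (\<exists>y'. st2 y a y' \<and> R x' y')"
  shows "lpath st1 x xs x' \<Longrightarrow> R x y \<Longrightarrow> \<exists>y'. lpath st2 y xs y' \<and> R x' y'"
proof (induction xs arbitrary: x y)
  case Nil then show ?case by simp
next
  case (Cons a xs)
  then obtain x1 where x1: "st1 x a x1" "lpath st1 x1 xs x'" by auto
  obtain y1 where y1: "st2 y a y1" "R x1 y1" using sim Cons.prems(2) x1(1) by blast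
  obtain y' where "lpath st2 y1 xs y'" "R x' y'" using Cons.IH[OF x1(2) y1(2)] by blast
  then show ?case using y1 by auto
qed

lemma sim_traces:
  assumes R0: "R x0 y0" and sim: "\<And>x y a x'. R x y \<Longrightarrow> st1 x a x' \<Longrightarrow> \<exists>y'. st2 y a y' \<and> R x' y'"
  shows "traces_of x0 st1 \<subseteq> traces_of y0 st2"
proof
  have simH: "\<forall>x y a x'. R x y \<longrightarrow> st1 x a x' \<longrightarrow> (\<exists>y'. st2 y a y' \<and> R x' y')"
    using sim by blast
  fix t assume t: "t \<in> traces_of x0 st1"
  show "t \<in> traces_of y0 st2"
  proof (cases t)
    case (Fin xs)
    then obtain g where "lpath st1 x0 xs g" using t traces_Fin by metis
    then obtain y' where "lpath st2 y0 xs y'" using sim_lpath[OF simH] R0 by blast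
    then show ?thesis using Fin traces_Fin by metis
  next
    case (Inf w)
    then obtain s where s: "s 0 = x0" "\<forall>k. st1 (s k) (w k) (s (Suc k))" using t traces_Inf by metis
    define tt where "tt = rec_nat y0 (\<lambda>k yk. SOME y'. st2 yk (w k) y' \<and> R (s (Suc k)) y')"
    have tt0: "tt 0 = y0" by (simp add: tt_def)
    have ttS: "tt (Suc k) = (SOME y'. st2 (tt k) (w k) y' \<and> R (s (Suc k)) y')" for k
      by (simp add: tt_def)
    have exk: "R (s k) (tt k) \<Longrightarrow> \<exists>y'. st2 (tt k) (w k) y' \<and> R (s (Suc k)) y'" for k
      using simH s by blast
    have Rk: "R (s k) (tt k)" for k
    proof (induction k)
      case 0 then show ?case using R0 s tt0 by simp
    next
      case (Suc k)
      show ?case using someI_ex[OF exk[OF Suc]] ttS[of k] by simp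
    qed
    have H: "R (s k) (tt k) \<and> st2 (tt k) (w k) (tt (Suc k))" for k
      using someI_ex[OF exk[OF Rk[of k]]] ttS[of k] Rk[of k] by simp
    then show ?thesis using Inf tt0 traces_Inf by metis
  qed
qed

lemma enum_range:
  fixes f :: "nat \<Rightarrow> nat"
  assumes sm: "strict_mono f"
  shows "enumerate (range f) = f"
proof -
  have inf: "infinite (range f)" using range_inj_infinite strict_mono_imp_inj_on[OF sm] by blast
  let ?g = "enumerate (range f)"
  have smg: "strict_mono ?g" using strict_mono_enumerate[OF inf] .
  have rg: "range ?g = range f" using range_enumerate[OF inf] .
  have H: "f k = ?g k" for k
  proof (induction k rule: less_induct)
    case (less k)
    have "f k \<in> range ?g" using rg by simp
    then obtain m where m: "f k = ?g m" by blast
    have "?g k \<in> range f" using rg by (metis rangeI)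
    then obtain p where p: "?g k = f p" by blast
    show ?case
    proof (cases "m < k")
      case True
      then have "f m < f k" using sm by (simp add: strict_mono_less)
      then show ?thesis using less[OF True] m by simp
    next
      case False
      show ?thesis
      proof (cases "m = k")
        case True then show ?thesis using m by simp
      next
        case False
        then have "k < m" using \<open>\<not> m < k\<close> by simp
        then have "?g k < ?g m" using smg by (simp add: strict_mono_less)
        then have "f p < f k" using m p by simp
        then have pk: "p < k" using sm by (simp add: strict_mono_less)
        then have "?g p = f p" using less by simp
        then have "?g p = ?g k" using p by simp
        moreover have "?g p < ?g k" using smg pk by (simp add: strict_mono_less)
        ultimately show ?thesis by simp
      qed
    qed
  qed
  show ?thesis
  proof (rule ext)
    fix k show "?g k = f k" using H[of k] by (rule sym)
  qed
qed

context alg begin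

abbreviation Si :: "'a set" where "Si \<equiv> lts_acts (A i)"

definition istep :: "(nat \<Rightarrow> 's) \<Rightarrow> 'a \<Rightarrow> (nat \<Rightarrow> 's) \<Rightarrow> bool" where
  "istep g a g' \<longleftrightarrow> a \<in> Si \<and> (\<exists>u. (\<forall>b\<in>set u. b \<notin> Si) \<and> lpath (gstep A n) g (u @ [a]) g')"

lemma exec_to_ipath: "lpath (gstep A n) g xs g' \<Longrightarrow> \<exists>h. lpath istep g (filter (\<lambda>a. a \<in> Si) xs) h"
proof (induction xs arbitrary: g rule: length_induct)
  case (1 xs)
  show ?case
  proof (cases "filter (\<lambda>a. a \<in> Si) xs = []")
    case True then show ?thesis by simp
  next
    case False
    let ?u = "takeWhile (\<lambda>a. a \<notin> Si) xs"
    have dw: "dropWhile (\<lambda>a. a \<notin> Si) xs \<noteq> []"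
      using False by (auto simp: dropWhile_eq_Nil_conv filter_empty_conv)
    then obtain a v where av: "dropWhile (\<lambda>a. a \<notin> Si) xs = a # v" by (cases "dropWhile (\<lambda>a. a \<notin> Si) xs") auto
    have aS: "a \<in> Si" and xs: "xs = ?u @ a # v" using av by (simp_all add: dropWhile_eq_Cons_conv)
    have uf: "\<forall>b\<in>set ?u. b \<notin> Si" by (auto dest: set_takeWhileD)
    have "lpath (gstep A n) g ((?u @ [a]) @ v) g'" using "1.prems" xs by (metis append.assoc append_Cons append_Nil)
    then obtain g1 where g1: "lpath (gstep A n) g (?u @ [a]) g1" "lpath (gstep A n) g1 v g'"
      unfolding lpath_append by blast
    have ist: "istep g a g1" using g1(1) uf aS by (auto simp: istep_def)
    have "length xs = length (?u @ a # v)" using xs by (rule arg_cong)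
    then have "length v < length xs" by simp
    then obtain h where "lpath istep g1 (filter (\<lambda>a. a \<in> Si) v) h" using "1.IH" g1(2) by blast
    moreover have "filter (\<lambda>a. a \<in> Si) xs = a # filter (\<lambda>a. a \<in> Si) v"
    proof -
      have "filter (\<lambda>a. a \<in> Si) (?u @ a # v) = a # filter (\<lambda>a. a \<in> Si) v"
        using uf aS by (simp add: filter_empty_conv)
      moreover have "filter (\<lambda>a. a \<in> Si) xs = filter (\<lambda>a. a \<in> Si) (?u @ a # v)"
        using xs by (rule arg_cong)
      ultimately show ?thesis by simp
    qed
    ultimately show ?thesis using ist by auto
  qed
qed

lemma ipath_to_exec: "lpath istep g ys h \<Longrightarrow> \<exists>xs. filter (\<lambda>a. a \<in> Si) xs = ys \<and> lpath (gstep A n) g xs h"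
proof (induction ys arbitrary: g)
  case Nil then show ?case by (intro exI[of _ "[]"]) simp
next
  case (Cons a ys)
  then obtain g1 where g1: "istep g a g1" "lpath istep g1 ys h" by auto
  then obtain u where u: "a \<in> Si" "\<forall>b\<in>set u. b \<notin> Si" "lpath (gstep A n) g (u @ [a]) g1"
    by (auto simp: istep_def)
  obtain xs where xs: "filter (\<lambda>a. a \<in> Si) xs = ys" "lpath (gstep A n) g1 xs h" using Cons.IH g1 by blast
  have "filter (\<lambda>a. a \<in> Si) (u @ [a] @ xs) = a # ys" using u xs by (simp add: filter_empty_conv)
  moreover have "lpath (gstep A n) g ((u @ [a]) @ xs) h" using u xs lpath_append by metis
  ultimately show ?case by (intro exI[of _ "u @ [a] @ xs"]) simp
qed

end

context alg begin

lemma inf_to_istep: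
  assumes st: "\<forall>k. gstep A n (s k) (w k) (s (Suc k))" and inf: "infinite {k. w k \<in> Si}"
  shows "Inf (w \<circ> enumerate {k. w k \<in> Si}) \<in> traces_of (s 0) istep"
proof -
  let ?S = "{k. w k \<in> Si}"
  let ?en = "enumerate ?S"
  define sp where "sp k = (case k of 0 \<Rightarrow> 0 | Suc k' \<Rightarrow> Suc (?en k'))" for k
  have sm: "strict_mono ?en" using strict_mono_enumerate[OF inf] .
  have inS: "?en k \<in> ?S" for k using enumerate_in_set[OF inf] .
  have rng: "range ?en = ?S" using range_enumerate[OF inf] .
  have le: "sp k \<le> ?en k" for k
  proof (cases k)
    case 0 then show ?thesis by (simp add: sp_def)
  next
    case (Suc k') then show ?thesis using sm by (simp add: sp_def strict_mono_def Suc_leI)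
  qed
  have notS: "m \<notin> ?S" if m: "sp k \<le> m" "m < ?en k" for k m
  proof
    assume "m \<in> ?S"
    then obtain j where j: "m = ?en j" using rng by blast
    then have "j < k" using m(2) sm by (simp add: strict_mono_less)
    then obtain k' where k: "k = Suc k'" "j \<le> k'" by (cases k) auto
    then have "?en j \<le> ?en k'" using sm by (simp add: strict_mono_less_eq)
    then show False using m(1) j k by (simp add: sp_def)
  qed
  have "istep (s (sp k)) (w (?en k)) (s (sp (Suc k)))" for k
  proof -
    have hs: "\<forall>m. sp k \<le> m \<and> m < Suc (?en k) \<longrightarrow> gstep A n (s m) (w m) (s (Suc m))" using st by blast
    have p: "lpath (gstep A n) (s (sp k)) (map w [sp k..<Suc (?en k)]) (s (Suc (?en k)))"
      by (rule fun_lpath_off[of "sp k" "Suc (?en k)" "gstep A n" s w, OF hs le_SucI[OF le[of k]]])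
    have eq: "map w [sp k..<Suc (?en k)] = map w [sp k..<?en k] @ [w (?en k)]" using le[of k] by simp
    have fr: "\<forall>b\<in>set (map w [sp k..<?en k]). b \<notin> Si" using notS by auto
    have iS: "w (?en k) \<in> Si" using inS by simp
    have sps: "sp (Suc k) = Suc (?en k)" by (simp add: sp_def)
    have p': "lpath (gstep A n) (s (sp k)) (map w [sp k..<?en k] @ [w (?en k)]) (s (sp (Suc k)))"
      using p unfolding eq sps .
    show ?thesis unfolding istep_def using iS fr p' by blast
  qed
  moreover have "s (sp 0) = s 0" by (simp add: sp_def)
  ultimately show ?thesis unfolding traces_Inf by (intro exI[of _ "\<lambda>k. s (sp k)"]) auto
qed

lemma concat_exec:
  assumes st: "\<forall>k. istep (h k) (ys k) (h (Suc k))"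
  shows "\<exists>s w. s 0 = h 0 \<and> (\<forall>m. gstep A n (s m) (w m) (s (Suc m)))
           \<and> infinite {m. w m \<in> Si} \<and> w \<circ> enumerate {m. w m \<in> Si} = ys"
proof -
  have ex: "\<exists>u. (\<forall>b\<in>set u. b \<notin> Si) \<and> lpath (gstep A n) (h k) (u @ [ys k]) (h (Suc k))" for k
    using st by (auto simp: istep_def)
  define u where "u k = (SOME u. (\<forall>b\<in>set u. b \<notin> Si) \<and> lpath (gstep A n) (h k) (u @ [ys k]) (h (Suc k)))" for k
  have u: "(\<forall>b\<in>set (u k). b \<notin> Si) \<and> lpath (gstep A n) (h k) (u k @ [ys k]) (h (Suc k))" for k
    unfolding u_def using someI_ex[OF ex] .
  have ysS: "ys k \<in> Si" for k using st by (auto simp: istep_def)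
  define l where "l k = u k @ [ys k]" for k
  have lne: "length (l k) \<ge> 1" for k by (simp add: l_def)
  have lnn: "l k \<noteq> []" for k by (simp add: l_def)
  have exs: "\<exists>\<sigma>. \<sigma> 0 = h k \<and> \<sigma> (length (l k)) = h (Suc k) \<and> (\<forall>q<length (l k). gstep A n (\<sigma> q) (l k ! q) (\<sigma> (Suc q)))" for k
    unfolding l_def by (rule lpath_fun) (rule conjunct2[OF u[of k]])
  define \<sigma> where "\<sigma> k = (SOME \<sigma>. \<sigma> 0 = h k \<and> \<sigma> (length (l k)) = h (Suc k) \<and> (\<forall>q<length (l k). gstep A n (\<sigma> q) (l k ! q) (\<sigma> (Suc q))))" for k
  have sig: "\<sigma> k 0 = h k \<and> \<sigma> k (length (l k)) = h (Suc k) \<and> (\<forall>q<length (l k). gstep A n (\<sigma> k q) (l k ! q) (\<sigma> k (Suc q)))" for k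
    unfolding \<sigma>_def using someI_ex[OF exs] .
  define T where "T k = (\<Sum>j<k. length (l j))" for k
  have TS: "T (Suc k) = T k + length (l k)" for k by (simp add: T_def)
  have T0: "T 0 = 0" by (simp add: T_def)
  have Tmono: "k \<le> k' \<Longrightarrow> T k \<le> T k'" for k k'
    by (induction k' rule: dec_induct) (auto simp: TS)
  have Tge: "k \<le> T k" for k
  proof (induction k)
    case (Suc k) then show ?case using lne[of k] TS[of k] by simp
  qed (simp add: T0)
  define kk where "kk m = (LEAST k. m < T (Suc k))" for m
  have kk1: "m < T (Suc (kk m))" for m
    unfolding kk_def by (rule LeastI[of _ m]) (use Tge[of "Suc m"] in simp)
  have kk2: "T (kk m) \<le> m" for m
  proof (cases "kk m")
    case 0 then show ?thesis by (simp add: T0)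
  next
    case (Suc k')
    then have "k' < kk m" by simp
    then have "\<not> m < T (Suc k')" unfolding kk_def by (rule not_less_Least)
    then show ?thesis using Suc by simp
  qed
  have kk_eq: "T k \<le> m \<Longrightarrow> m < T (Suc k) \<Longrightarrow> kk m = k" for k m
  proof -
    assume a: "T k \<le> m" "m < T (Suc k)"
    show "kk m = k" unfolding kk_def
    proof (rule Least_equality)
      show "m < T (Suc k)" using a by simp
    next
      fix k' assume k': "m < T (Suc k')"
      show "k \<le> k'"
      proof (rule ccontr)
        assume "\<not> k \<le> k'"
        then have "Suc k' \<le> k" by simp
        then have "T (Suc k') \<le> T k" by (rule Tmono)
        then show False using a k' by simp
      qed
    qed
  qed
  define s where "s m = \<sigma> (kk m) (m - T (kk m))" for m
  define w where "w m = l (kk m) ! (m - T (kk m))" for m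
  have off: "m - T (kk m) < length (l (kk m))" for m using kk1[of m] kk2[of m] TS by simp
  have s0: "s 0 = h 0"
  proof -
    have "l 0 \<noteq> []" by (simp add: l_def)
    then have "kk 0 = 0" using kk_eq[of 0 0] T0 TS[of 0] by simp
    then show ?thesis using sig by (simp add: s_def T0)
  qed
  have steps: "gstep A n (s m) (w m) (s (Suc m))" for m
  proof -
    let ?k = "kk m" and ?q = "m - T (kk m)"
    have g: "gstep A n (\<sigma> ?k ?q) (l ?k ! ?q) (\<sigma> ?k (Suc ?q))" using sig off by blast
    show ?thesis
    proof (cases "Suc m < T (Suc ?k)")
      case True
      have kS: "kk (Suc m) = ?k" by (rule kk_eq[OF le_SucI[OF kk2[of m]] True])
      have "Suc m - T ?k = Suc ?q" using kk2[of m] by simp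
      then have "s (Suc m) = \<sigma> ?k (Suc ?q)" using kS by (simp add: s_def)
      then show ?thesis using g by (simp add: s_def w_def)
    next
      case False
      then have eq: "Suc m = T (Suc ?k)" using kk1[of m] by simp
      have lt: "Suc m < T (Suc (Suc ?k))" using eq TS[of "Suc ?k"] lnn[of "Suc ?k"] by simp
      have kS: "kk (Suc m) = Suc ?k" by (rule kk_eq[OF eq_imp_le[OF sym[OF eq]] lt])
      have "s (Suc m) = \<sigma> (Suc ?k) 0" using eq kS by (simp add: s_def)
      also have "\<dots> = h (Suc ?k)" using sig by simp
      also have "\<dots> = \<sigma> ?k (length (l ?k))" using sig by simp
      finally have s1: "s (Suc m) = \<sigma> ?k (length (l ?k))" .
      have "length (l ?k) = Suc ?q" using eq kk2[of m] TS[of ?k] by simp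
      then have "s (Suc m) = \<sigma> ?k (Suc ?q)" using s1 by simp
      then show ?thesis using g by (simp add: s_def w_def)
    qed
  qed
  define P where "P k = T (Suc k) - 1" for k
  have kkP: "kk (P k) = k" for k
  proof (rule kk_eq)
    show "T k \<le> P k" using TS[of k] lne[of k] by (simp add: P_def)
    show "P k < T (Suc k)" using TS[of k] lne[of k] by (simp add: P_def)
  qed
  have wP: "w (P k) = ys k" for k
  proof -
    have "P k - T k = length (l k) - 1" using TS lnn[of k] by (simp add: P_def)
    then show ?thesis using kkP by (simp add: w_def l_def)
  qed
  have smP: "strict_mono P"
  unfolding strict_mono_Suc_iff
  proof
    fix k show "P k < P (Suc k)" using TS lne[of k] lne[of "Suc k"] by (simp add: P_def)
  qed
  have Sset: "{m. w m \<in> Si} = range P"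
  proof
    show "{m. w m \<in> Si} \<subseteq> range P"
    proof
      fix m assume m: "m \<in> {m. w m \<in> Si}"
      let ?k = "kk m" and ?q = "m - T (kk m)"
      have "?q = length (l ?k) - 1"
      proof (rule ccontr)
        assume "?q \<noteq> length (l ?k) - 1"
        then have "?q < length (u ?k)" using off[of m] by (simp add: l_def)
        then have "w m \<in> set (u ?k)" by (simp add: w_def l_def nth_append)
        then show False using m u by blast
      qed
      then have "m = P ?k" using kk2[of m] off[of m] TS by (simp add: P_def)
      then show "m \<in> range P" by simp
    qed
  next
    show "range P \<subseteq> {m. w m \<in> Si}" using wP ysS by auto
  qed
  have inf: "infinite {m. w m \<in> Si}"
    unfolding Sset using range_inj_infinite strict_mono_imp_inj_on[OF smP] by blast
  have "w \<circ> enumerate {m. w m \<in> Si} = ys"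
    unfolding Sset enum_range[OF smP] using wP by auto
  then show ?thesis using s0 steps inf by blast
qed

end

lemma finite_funs:
  fixes n :: nat and F :: "nat \<Rightarrow> 'b set" and d :: "nat \<Rightarrow> 'b"
  assumes "\<forall>j<n. finite (F j)"
  shows "finite {g. (\<forall>j<n. g j \<in> F j) \<and> (\<forall>j. n \<le> j \<longrightarrow> g j = d j)}"
proof (rule inj_on_finite[of "\<lambda>g. map g [0..<n]"])
  let ?X = "{g. (\<forall>j<n. g j \<in> F j) \<and> (\<forall>j. n \<le> j \<longrightarrow> g j = d j)}"
  show "inj_on (\<lambda>g. map g [0..<n]) ?X"
  proof (rule inj_onI)
    fix g g' assume g: "g \<in> ?X" and g': "g' \<in> ?X" and eq: "map g [0..<n] = map g' [0..<n]"
    show "g = g'"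
    proof
      fix j show "g j = g' j"
      proof (cases "j < n")
        case True
        have "map g [0..<n] ! j = map g' [0..<n] ! j" by (simp only: eq)
        then show ?thesis using True by simp
      next
        case False then show ?thesis using g g' by simp
      qed
    qed
  qed
  show "(\<lambda>g. map g [0..<n]) ` ?X \<subseteq> {xs. set xs \<subseteq> (\<Union>j<n. F j) \<and> length xs = n}"
  proof
    fix xs assume "xs \<in> (\<lambda>g. map g [0..<n]) ` ?X"
    then obtain g where g: "g \<in> ?X" "xs = map g [0..<n]" by blast
    have "set xs \<subseteq> (\<Union>j<n. F j)"
    proof
      fix y assume "y \<in> set xs"
      then obtain j where "j < n" "y = g j" using g by auto
      then show "y \<in> (\<Union>j<n. F j)" using g by blast
    qed
    then show "xs \<in> {xs. set xs \<subseteq> (\<Union>j<n. F j) \<and> length xs = n}" using g by simp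
  qed
  show "finite {xs. set xs \<subseteq> (\<Union>j<n. F j) \<and> length xs = n}"
    by (rule finite_lists_length_eq) (use assms in auto)
qed

locale main = alg A n i for A :: "nat \<Rightarrow> ('a, 's) lts" and n i +
  assumes fin: "\<forall>j<n. finite_lts (A j)" and iface: "i < n" and nondiv: "\<not> divergent A n i"
begin

theorem proj_TrPar: "proj Si ` TrPar A n = traces_of (ginit A) istep"
proof
  show "proj Si ` TrPar A n \<subseteq> traces_of (ginit A) istep"
  proof
    fix y assume "y \<in> proj Si ` TrPar A n"
    then obtain x where x: "x \<in> TrPar A n" "y = proj Si x" by blast
    show "y \<in> traces_of (ginit A) istep"
    proof (cases x)
      case (Fin xs)
      then obtain g where "lpath (gstep A n) (ginit A) xs g" using x traces_Fin unfolding TrPar_def by metis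
      then obtain h where "lpath istep (ginit A) (filter (\<lambda>a. a \<in> Si) xs) h" using exec_to_ipath by blast
      then show ?thesis using x Fin traces_Fin by fastforce
    next
      case (Inf w)
      then obtain s where s: "s 0 = ginit A" "\<forall>k. gstep A n (s k) (w k) (s (Suc k))"
        using x traces_Inf unfolding TrPar_def by metis
      have inf: "infinite {k. w k \<in> Si}"
        using nondiv x Inf unfolding divergent_def by blast
      have "Inf (w \<circ> enumerate {k. w k \<in> Si}) \<in> traces_of (s 0) istep"
        by (rule inf_to_istep[OF s(2) inf])
      then show ?thesis using x Inf inf s(1) by simp
    qed
  qed
next
  show "traces_of (ginit A) istep \<subseteq> proj Si ` TrPar A n"
  proof
    fix y assume y: "y \<in> traces_of (ginit A) istep"
    show "y \<in> proj Si ` TrPar A n"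
    proof (cases y)
      case (Fin ys)
      then obtain h where "lpath istep (ginit A) ys h" using y traces_Fin by metis
      then obtain xs where xs: "filter (\<lambda>a. a \<in> Si) xs = ys" "lpath (gstep A n) (ginit A) xs h"
        using ipath_to_exec by blast
      have "Fin xs \<in> TrPar A n" unfolding TrPar_def traces_Fin using xs by blast
      moreover have "proj Si (Fin xs) = y" using xs Fin by simp
      ultimately show ?thesis by (metis image_eqI)
    next
      case (Inf ys)
      then obtain h where h: "h 0 = ginit A" "\<forall>k. istep (h k) (ys k) (h (Suc k))"
        using y traces_Inf by metis
      obtain s w where sw: "s 0 = h 0" "\<forall>m. gstep A n (s m) (w m) (s (Suc m))"
        "infinite {m. w m \<in> Si}" "w \<circ> enumerate {m. w m \<in> Si} = ys"
        using concat_exec[OF h(2)] by blast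
      have "Inf w \<in> TrPar A n" unfolding TrPar_def traces_Inf using sw h by metis
      moreover have "proj Si (Inf w) = y" using sw Inf by simp
      ultimately show ?thesis by (metis image_eqI)
    qed
  qed
qed

definition Gs :: "(nat \<Rightarrow> 's) set" where
  "Gs = {g. (\<forall>j<n. g j \<in> lts_states (A j)) \<and> (\<forall>j. n \<le> j \<longrightarrow> g j = lts_init (A j))}"

lemma finite_Gs: "finite Gs"
  unfolding Gs_def by (rule finite_funs) (use fin in \<open>auto simp: finite_lts_def\<close>)

lemma ginit_Gs: "ginit A \<in> Gs"
  using fin by (auto simp: Gs_def ginit_def finite_lts_def)

lemma gstep_Gs: "gstep A n g a g' \<Longrightarrow> g \<in> Gs \<Longrightarrow> g' \<in> Gs"
proof -
  assume st: "gstep A n g a g'" and g: "g \<in> Gs"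
  then obtain t where t: "(a, t) \<in> gtrans A n" "gmove t g g'" by (auto simp: gstep_def)
  have mv: "case t j of None \<Rightarrow> g' j = g j | Some (p, q) \<Rightarrow> g j = p \<and> g' j = q" for j
    using t(2) by (simp add: gmove_def)
  have "g' j \<in> lts_states (A j)" if j: "j < n" for j
  proof (cases "t j")
    case None then show ?thesis using mv[of j] g j by (simp add: Gs_def)
  next
    case (Some tr)
    obtain p q where tr: "tr = (p, q)" by (cases tr)
    have gt: "(if a \<in> lts_acts (A j) then (\<exists>tr. t j = Some tr \<and> tr \<in> lts_trans (A j) \<and> lts_lab (A j) tr = a) else t j = None)"
      using t(1) j unfolding gtrans_def by blast
    have "tr \<in> lts_trans (A j)" using gt Some by (cases "a \<in> lts_acts (A j)") auto
    then have "q \<in> lts_states (A j)" using fin j tr unfolding finite_lts_def by blast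
    then show ?thesis using mv[of j] Some tr by simp
  qed
  moreover have "g' j = lts_init (A j)" if j: "n \<le> j" for j
  proof -
    have "t j = None" using t(1) j unfolding gtrans_def by auto
    then show ?thesis using mv[of j] g j by (simp add: Gs_def)
  qed
  ultimately show "g' \<in> Gs" by (simp add: Gs_def)
qed

lemma lpath_Gs: "lpath (gstep A n) g xs g' \<Longrightarrow> g \<in> Gs \<Longrightarrow> g' \<in> Gs"
  by (induction xs arbitrary: g) (auto intro: gstep_Gs)

lemma pump:
  assumes p: "lpath (gstep A n) (ginit A) (p @ xs) g" and fr: "\<forall>a\<in>set xs. a \<notin> Si"
  shows "length xs \<le> card Gs"
proof (rule ccontr)
  assume big: "\<not> length xs \<le> card Gs"
  obtain s where s: "s 0 = ginit A" "\<forall>k<length (p @ xs). gstep A n (s k) ((p @ xs) ! k) (s (Suc k))"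
    using lpath_fun[OF p] by blast
  have sG: "k \<le> length (p @ xs) \<Longrightarrow> s k \<in> Gs" for k
  proof (induction k)
    case 0 then show ?case using s ginit_Gs by simp
  next
    case (Suc k)
    then have lt: "k < length (p @ xs)" by simp
    then have "gstep A n (s k) ((p @ xs) ! k) (s (Suc k))" using s(2) by blast
    moreover have "s k \<in> Gs" using Suc lt by simp
    ultimately show ?case by (rule gstep_Gs)
  qed
  let ?f = "\<lambda>m. s (length p + m)"
  have "?f ` {0..length xs} \<subseteq> Gs" using sG by auto
  then have "card (?f ` {0..length xs}) \<le> card Gs" using finite_Gs by (simp add: card_mono)
  then have "card (?f ` {0..length xs}) < card {0..length xs}" using big by simp
  then have "\<not> inj_on ?f {0..length xs}" by (rule pigeonhole)
  then obtain a b where ab0: "a \<le> length xs" "b \<le> length xs" "a \<noteq> b" "?f a = ?f b"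
    unfolding inj_on_def by auto
  obtain a b where ab: "a < b" "b \<le> length xs" "?f a = ?f b"
  proof (cases "a < b")
    case True then show ?thesis using that ab0 by blast
  next
    case False then have "b < a" using ab0 by simp
    then show ?thesis using that[of b a] ab0 by simp
  qed
  define a' where "a' = length p + a"
  define d where "d = b - a"
  have dpos: "0 < d" using ab by (simp add: d_def)
  have sper: "s (a' + d) = s a'" using ab by (simp add: a'_def d_def)
  define \<phi> where "\<phi> k = (if k < a' then k else a' + (k - a') mod d)" for k
  have phlt: "\<phi> k < a' + d" for k using dpos by (simp add: \<phi>_def)
  have phbound: "\<phi> k < length (p @ xs)" for k
    using phlt[of k] ab by (simp add: a'_def d_def)
  have phS: "s (\<phi> (Suc k)) = s (Suc (\<phi> k))" for k
  proof (cases "Suc k < a'")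
    case True then show ?thesis by (simp add: \<phi>_def)
  next
    case False
    show ?thesis
    proof (cases "k < a'")
      case True
      then have "Suc k = a'" using False by simp
      then show ?thesis using True by (simp add: \<phi>_def)
    next
      case ka: False
      have e1: "\<phi> k = a' + (k - a') mod d" using ka by (simp add: \<phi>_def)
      have e2: "\<phi> (Suc k) = a' + (Suc (k - a')) mod d" using ka by (simp add: \<phi>_def Suc_diff_le)
      show ?thesis
      proof (cases "Suc ((k - a') mod d) = d")
        case True
        then have "\<phi> (Suc k) = a'" using e2 by (simp add: mod_Suc)
        moreover have "Suc (\<phi> k) = a' + d" using e1 True by simp
        ultimately show ?thesis using sper by simp
      next
        case False
        then have "\<phi> (Suc k) = Suc (\<phi> k)" using e1 e2 by (simp add: mod_Suc)
        then show ?thesis by simp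
      qed
    qed
  qed
  define w where "w k = (p @ xs) ! (\<phi> k)" for k
  have steps: "\<forall>k. gstep A n (s (\<phi> k)) (w k) (s (\<phi> (Suc k)))"
    using s(2) phbound phS by (simp add: w_def)
  have ph0: "\<phi> 0 = 0" by (simp add: \<phi>_def)
  have "Inf w \<in> TrPar A n" unfolding TrPar_def traces_Inf
    using steps ph0 s(1) by (intro exI[of _ "\<lambda>k. s (\<phi> k)"]) simp
  moreover have "{k. w k \<in> Si} \<subseteq> {..<a'}"
  proof
    fix k assume k: "k \<in> {k. w k \<in> Si}"
    show "k \<in> {..<a'}"
    proof (rule ccontr)
      assume "k \<notin> {..<a'}"
      then have "\<phi> k = length p + (a + (k - a') mod d)" by (simp add: \<phi>_def a'_def)
      moreover have "a + (k - a') mod d < length xs" using dpos ab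
        by (metis add_less_cancel_left d_def le_add_diff_inverse less_imp_le_nat mod_less_divisor order_less_le_trans)
      ultimately have "w k \<in> set xs" by (simp add: w_def nth_append)
      then show False using k fr by blast
    qed
  qed
  then have "finite {k. w k \<in> Si}" by (rule finite_subset) simp
  ultimately show False using nondiv unfolding divergent_def by blast
qed

lemma bound:
  "lpath (gstep A n) (ginit A) (p @ xs) g \<Longrightarrow>
     length xs \<le> (length (filter (\<lambda>a. a \<in> Si) xs) + 1) * (card Gs + 1)"
proof (induction "length xs" arbitrary: xs p g rule: less_induct)
  case less
  let ?u = "takeWhile (\<lambda>a. a \<notin> Si) xs"
  show ?case
  proof (cases "dropWhile (\<lambda>a. a \<notin> Si) xs")
    case Nil
    then have fr: "\<forall>a\<in>set xs. a \<notin> Si" by (simp add: dropWhile_eq_Nil_conv)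
    have "length xs \<le> card Gs" using pump[OF less.prems fr] .
    then show ?thesis by simp
  next
    case (Cons a v)
    then have aS: "a \<in> Si" and xs: "xs = ?u @ a # v" by (simp_all add: dropWhile_eq_Cons_conv)
    have uf: "\<forall>b\<in>set ?u. b \<notin> Si" by (auto dest: set_takeWhileD)
    have "lpath (gstep A n) (ginit A) ((p @ ?u) @ (a # v)) g" using less.prems xs by (metis append.assoc)
    then obtain g1 where g1: "lpath (gstep A n) (ginit A) (p @ ?u) g1" unfolding lpath_append by blast
    have lu: "length ?u \<le> card Gs" using pump[OF g1 uf] .
    have pth: "lpath (gstep A n) (ginit A) ((p @ ?u @ [a]) @ v) g" using less.prems xs by (metis append.assoc append_Cons append_Nil)
    have lx: "length xs = length ?u + Suc (length v)" using xs by (metis length_append length_Cons)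
    then have lt: "length v < length xs" by simp
    have IH: "length v \<le> (length (filter (\<lambda>a. a \<in> Si) v) + 1) * (card Gs + 1)"
      by (rule less.hyps[OF lt pth])
    have fx: "filter (\<lambda>a. a \<in> Si) xs = a # filter (\<lambda>a. a \<in> Si) v"
    proof -
      have "filter (\<lambda>a. a \<in> Si) (?u @ a # v) = a # filter (\<lambda>a. a \<in> Si) v"
        using uf aS by (simp add: filter_empty_conv)
      moreover have "filter (\<lambda>a. a \<in> Si) xs = filter (\<lambda>a. a \<in> Si) (?u @ a # v)"
        using xs by (rule arg_cong)
      ultimately show ?thesis by simp
    qed
    show ?thesis unfolding fx lx using lu IH by (simp add: algebra_simps)
  qed
qed

end

context main begin

lemma config_Gs: "config S \<Longrightarrow> gst (mkS S) \<in> Gs"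
  using config_exec lpath_Gs ginit_Gs by blast

lemma past_bound:
  assumes I: "inv E cp" and eE: "e \<in> E"
  shows "card (past e) \<le> (card Gs + 2) * (card Gs + 1)"
proof -
  have cpe: "config (past e)" using I eE by (simp add: inv_def)
  obtain \<rho> where r: "set \<rho> = past e" "distinct \<rho>" "lpath (gstep A n) (ginit A) (map eact \<rho>) (gst (mkS (past e)))"
    using config_exec[OF cpe] by blast
  have b: "length (map eact \<rho>) \<le> (length (filter (\<lambda>a. a \<in> Si) (map eact \<rho>)) + 1) * (card Gs + 1)"
    by (rule bound[of "[]"]) (use r(3) in simp)
  have lr: "length \<rho> = card (past e)" using distinct_card[OF r(2)] r(1) by simp
  have "length (filter (\<lambda>a. a \<in> Si) (map eact \<rho>)) = length (filter (\<lambda>x. eact x \<in> Si) \<rho>)"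
    by (simp add: filter_map comp_def)
  also have "\<dots> = card {x \<in> past e. eact x \<in> Si}"
  proof -
    have "card (set (filter (\<lambda>x. eact x \<in> Si) \<rho>)) = length (filter (\<lambda>x. eact x \<in> Si) \<rho>)"
      using distinct_card distinct_filter r(2) by blast
    moreover have "set (filter (\<lambda>x. eact x \<in> Si) \<rho>) = {x \<in> past e. eact x \<in> Si}" using r(1) by auto
    ultimately show ?thesis by simp
  qed
  finally have cnt: "length (filter (\<lambda>a. a \<in> Si) (map eact \<rho>)) = card {x \<in> past e. eact x \<in> Si}" .
  let ?C = "fst ` cp"
  let ?NC = "{x \<in> E. x \<notin> ?C \<and> ievent i x}"
  have finE: "finite E" using I by (simp add: inv_def)
  have sub: "{x \<in> past e. eact x \<in> Si} \<subseteq> insert e ?NC"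
  proof
    fix x assume x: "x \<in> {x \<in> past e. eact x \<in> Si}"
    show "x \<in> insert e ?NC"
    proof (cases "x = e")
      case False
      have xp: "(x, e) \<in> dpred\<^sup>*" using x by (simp add: past_def)
      then have "(x, e) \<in> dpred\<^sup>+" using False by (meson rtranclD)
      then have cl: "causal_less x e" by (simp add: causal_less_def)
      have "x \<notin> ?C" using I eE cl unfolding inv_def by blast
      moreover have "x \<in> E" using I eE x unfolding inv_def by blast
      moreover have "wfe x" using cpe x config_wfe by blast
      moreover have "ievent i x" using ievent_act[OF \<open>wfe x\<close> iface] x by (simp add: ievent_def)
      ultimately show ?thesis by simp
    qed simp
  qed
  have injNC: "inj_on (\<lambda>x. gst (Mark A n x)) ?NC"
  proof (rule inj_onI)
    fix x y assume x: "x \<in> ?NC" and y: "y \<in> ?NC" and eq: "gst (Mark A n x) = gst (Mark A n y)"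
    have "St A n x = St A n y" using eq St_eq_iff by blast
    then show "x = y" using I x y unfolding inv_def by blast
  qed
  have imgNC: "(\<lambda>x. gst (Mark A n x)) ` ?NC \<subseteq> Gs"
  proof
    fix g assume "g \<in> (\<lambda>x. gst (Mark A n x)) ` ?NC"
    then obtain x where x: "x \<in> ?NC" "g = gst (Mark A n x)" by blast
    have "config (past x)" using I x unfolding inv_def by blast
    then show "g \<in> Gs" using config_Gs x by (simp add: Mark_eq)
  qed
  have cNC: "card ?NC \<le> card Gs" using card_inj_on_le[OF injNC imgNC finite_Gs] .
  have "card {x \<in> past e. eact x \<in> Si} \<le> card (insert e ?NC)"
    using sub finE by (intro card_mono) auto
  also have "\<dots> \<le> Suc (card ?NC)" using card_insert_le_m1 by (simp add: card_insert_if finE)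
  finally have "card {x \<in> past e. eact x \<in> Si} \<le> card Gs + 1" using cNC by simp
  then have "length (filter (\<lambda>a. a \<in> Si) (map eact \<rho>)) + 1 \<le> card Gs + 2" using cnt by simp
  then have "(length (filter (\<lambda>a. a \<in> Si) (map eact \<rho>)) + 1) * (card Gs + 1) \<le> (card Gs + 2) * (card Gs + 1)"
    by (rule mult_right_mono) simp
  then show ?thesis using b lr by simp
qed

definition U :: "nat \<Rightarrow> ('a,'s) event set" where
  "U m = {e. config (past e) \<and> card (past e) \<le> m}"

lemma finite_trans: "j < n \<Longrightarrow> finite (lts_trans (A j))"
  using fin unfolding finite_lts_def by (meson finite_SigmaI finite_subset)

lemma finite_gtrans: "finite (gtrans A n)"
proof -
  let ?T = "{t. (\<forall>j<n. t j \<in> insert None (Some ` lts_trans (A j))) \<and> (\<forall>j. n \<le> j \<longrightarrow> t j = (\<lambda>_. None) j)}"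
  have fT: "finite ?T" by (rule finite_funs) (auto intro: finite_trans)
  have fa: "finite (gacts A n)" unfolding gacts_def using fin finite_lts_def by auto
  have "gtrans A n \<subseteq> gacts A n \<times> ?T"
  proof
    fix x assume x: "x \<in> gtrans A n"
    obtain a t where at: "x = (a, t)" by (cases x)
    have "t j \<in> insert None (Some ` lts_trans (A j))" if j: "j < n" for j
    proof -
      have gt: "(if a \<in> lts_acts (A j) then (\<exists>tr. t j = Some tr \<and> tr \<in> lts_trans (A j) \<and> lts_lab (A j) tr = a) else t j = None)"
        using x at j unfolding gtrans_def by blast
      then show ?thesis by (cases "a \<in> lts_acts (A j)") auto
    qed
    moreover have "a \<in> gacts A n" "\<forall>j. n \<le> j \<longrightarrow> t j = None" using x at unfolding gtrans_def by auto
    ultimately show "x \<in> gacts A n \<times> ?T" using at by simp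
  qed
  then show ?thesis using fT fa by (meson finite_SigmaI finite_subset)
qed

lemma finite_fsets: "finite X \<Longrightarrow> finite {M :: 'c fset. fset M \<subseteq> X}"
proof -
  assume X: "finite X"
  show ?thesis
  proof (rule inj_on_finite[of fset _ "Pow X"])
    show "inj_on fset {M. fset M \<subseteq> X}" by (meson fset_inject inj_onI)
  qed (use X in auto)
qed

lemma finite_M0: "finite (M0 A n)"
proof -
  have "M0 A n = (\<lambda>j. C0 j (lts_init (A j))) ` {..<n}" by (auto simp: M0_def)
  then show ?thesis by simp
qed

lemma finite_U: "finite (U m)"
proof (induction m)
  case 0
  have "U 0 = {}"
  proof -
    have False if e: "e \<in> U 0" for e
    proof -
      have "finite (past e)" using e by (simp add: U_def config_def)
      moreover have "past e \<noteq> {}" using past_self by blast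
      ultimately show False using e by (simp add: U_def)
    qed
    then show ?thesis by blast
  qed
  then show ?case by simp
next
  case (Suc m)
  let ?X = "M0 A n \<union> \<Union>(eout ` U m)"
  have fX: "finite ?X"
  proof -
    have "\<forall>e\<in>U m. finite (eout e)"
      using past_self by (auto simp: U_def intro: wfe_finite_eout config_wfe)
    then show ?thesis using Suc finite_M0 by simp
  qed
  let ?F = "(\<lambda>((a, t), M). Ev a t M) ` (gtrans A n \<times> {M. fset M \<subseteq> ?X})"
  have fF: "finite ?F" using finite_gtrans finite_fsets[OF fX] by simp
  have "U (Suc m) \<subseteq> ?F"
  proof
    fix e assume eU: "e \<in> U (Suc m)"
    obtain a t M where e: "e = Ev a t M" by (cases e)
    have cpe: "config (past e)" using eU by (simp add: U_def)
    have we: "wfe e" using config_wfe[OF cpe past_self] .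
    have gt: "(a, t) \<in> gtrans A n" using we e by (simp add: wfe_def)
    have "fset M \<subseteq> ?X"
    proof
      fix c assume cM: "c \<in> fset M"
      then have ce: "c \<in> ein e" using e by simp
      then have "c \<in> M0 A n \<union> OS (past e)" using cpe past_self unfolding config_def by blast
      then show "c \<in> ?X"
      proof
        assume "c \<in> OS (past e)"
        then obtain x j where x: "x \<in> past e" "c = Cout x j" "etr x j \<noteq> None"
          by (auto simp: OS_def eout_def)
        have dx: "(x, e) \<in> dpred" using ce x by (auto simp: dpred_iff)
        have "e \<notin> past x"
        proof
          assume "e \<in> past x"
          then have "(e, x) \<in> dpred\<^sup>*" by (simp add: past_def)
          then have "(x, x) \<in> dpred\<^sup>+" by (rule rtrancl_into_trancl2[OF dx])
          then show False using dpred_trancl_irrefl by blast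
        qed
        then have ps: "past x \<subset> past e" using past_mono[OF x(1)] past_self by blast
        have "finite (past e)" using cpe by (simp add: config_def)
        then have "card (past x) < card (past e)" using ps by (rule psubset_card_mono)
        then have "card (past x) \<le> m" using eU by (simp add: U_def)
        moreover have "config (past x)" using config_past_config[OF cpe x(1)] .
        ultimately have "x \<in> U m" by (simp add: U_def)
        then show ?thesis using x by (auto simp: eout_def)
      qed simp
    qed
    then show "e \<in> ?F" using gt e by force
  qed
  then show ?case using fF by (rule finite_subset)
qed

theorem alg_terminates: "\<not> (\<exists>f. f 0 = ({}, {}) \<and> (\<forall>k. alg_step A n i (f k) (f (Suc k))))"
proof
  assume "\<exists>f. f 0 = ({}, {}) \<and> (\<forall>k. alg_step A n i (f k) (f (Suc k)))"
  then obtain f where f0: "f 0 = ({}, {})" and fs: "\<forall>k. alg_step A n i (f k) (f (Suc k))" by blast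
  have R: "(alg_step A n i)\<^sup>*\<^sup>* ({}, {}) (f k)" for k
  proof (induction k)
    case 0 then show ?case using f0 by simp
  next
    case (Suc k) then show ?case using fs by (meson rtranclp.rtrancl_into_rtrancl)
  qed
  have I: "inv (fst (f k)) (snd (f k))" for k using inv_reach[OF R] .
  have card: "card (fst (f k)) = k" for k
  proof (induction k)
    case 0 then show ?case using f0 by simp
  next
    case (Suc k)
    obtain e where e: "e \<notin> fst (f k)" "fst (f (Suc k)) = insert e (fst (f k))"
      using inv_step[of "fst (f k)" "snd (f k)" "f (Suc k)"] I[of k] fs by auto
    have "finite (fst (f k))" using I[of k] by (simp add: inv_def)
    then show ?case using e Suc by simp
  qed
  let ?L = "(card Gs + 2) * (card Gs + 1)"
  have sub: "fst (f k) \<subseteq> U ?L" for k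
  proof
    fix e assume e: "e \<in> fst (f k)"
    have "config (past e)" using I[of k] e by (simp add: inv_def)
    moreover have "card (past e) \<le> ?L" using past_bound[OF I[of k] e] .
    ultimately show "e \<in> U ?L" by (simp add: U_def)
  qed
  have "card (fst (f (Suc (card (U ?L))))) \<le> card (U ?L)"
    using card_mono[OF finite_U sub] .
  then show False using card by simp
qed

end

lemma gmove_det: "gmove t g g1 \<Longrightarrow> gmove t g g2 \<Longrightarrow> g1 = g2"
proof
  fix j assume m1: "gmove t g g1" and m2: "gmove t g g2"
  have a: "case t j of None \<Rightarrow> g1 j = g j | Some (p, q) \<Rightarrow> g j = p \<and> g1 j = q" using m1 by (simp add: gmove_def)
  have b: "case t j of None \<Rightarrow> g2 j = g j | Some (p, q) \<Rightarrow> g j = p \<and> g2 j = q" using m2 by (simp add: gmove_def)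
  show "g1 j = g2 j" using a b by (auto split: option.splits)
qed

context main begin

lemma jc_ifree:
  "iscut K \<Longrightarrow> fseq K u \<Longrightarrow> \<forall>x\<in>set u. wfe x \<and> etr x i = None \<Longrightarrow> jc (mk K u) i = jc K i"
proof (induction u arbitrary: K)
  case Nil then show ?case by simp
next
  case (Cons x u)
  have w: "wfe x" "etr x i = None" "ein x \<subseteq> K" using Cons.prems by auto
  have c: "iscut (fire K x)" using fire_cut[OF Cons.prems(1) w(1) w(3)] by simp
  have "jc (mk (fire K x) u) i = jc (fire K x) i" using Cons.IH[OF c] Cons.prems by simp
  also have "\<dots> = jc K i" using jc_fire_other[OF Cons.prems(1) w(1) w(3) iface w(2)] .
  finally show ?case by simp
qed

lemma finite_mkS: "config F \<Longrightarrow> finite (mkS F)"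
proof -
  assume c: "config F"
  have "finite (OS F)" unfolding OS_def using c by (auto simp: config_def intro: wfe_finite_eout)
  then show ?thesis unfolding mkS_def using finite_M0 by auto
qed

lemma ievent_Si: "wfe x \<Longrightarrow> ievent i x \<longleftrightarrow> eact x \<in> Si"
  using ievent_act[OF _ iface] by (simp add: ievent_def)

lemma seg:
  assumes cP: "config P" and cQ: "config (past e)" and PQ: "P \<subseteq> past e"
    and bP: "b \<in> mkS P" and bi: "fst (clabel b) = i" and be: "b \<in> ein e" and ie: "ievent i e"
  shows "istep (gst (mkS P)) (eact e) (gst (mkS (past e)))"
proof -
  let ?Q = "past e"
  let ?Q' = "past e - {e}"
  have we: "wfe e" using config_wfe[OF cQ past_self] .
  have noback: "x \<in> ?Q \<Longrightarrow> (e, x) \<in> dpred \<Longrightarrow> False" for x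
  proof -
    assume x: "x \<in> ?Q" and d: "(e, x) \<in> dpred"
    have "(x, e) \<in> dpred\<^sup>*" using x by (simp add: past_def)
    then have "(e, e) \<in> dpred\<^sup>+" by (rule rtrancl_into_trancl2[OF d])
    then show False using dpred_trancl_irrefl by blast
  qed
  have cQ': "config ?Q'"
  proof (rule config_sub[OF cQ])
    show "?Q' \<subseteq> ?Q" by blast
    show "\<forall>x\<in>?Q'. \<forall>z. (z, x) \<in> dpred \<longrightarrow> z \<in> ?Q'"
    proof (intro ballI allI impI)
      fix x z assume x: "x \<in> ?Q'" and d: "(z, x) \<in> dpred"
      have "z \<in> ?Q" using past_closed x d by blast
      moreover have "z \<noteq> e" using noback x d by blast
      ultimately show "z \<in> ?Q'" by blast
    qed
  qed
  have eP: "e \<notin> P"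
  proof
    assume "e \<in> P"
    then have "b \<in> IS P" using be by (auto simp: IS_iff)
    then show False using bP by (simp add: mkS_def)
  qed
  have PQ': "P \<subseteq> ?Q'" using PQ eP by blast
  obtain \<rho> where r: "set \<rho> = ?Q' - P" "distinct \<rho>" "fseq (mkS P) \<rho>" "mk (mkS P) \<rho> = mkS ?Q'"
    using linearize[OF cP cQ' PQ'] by blast
  have inp: "ein e \<subseteq> mkS ?Q'"
  proof
    fix c assume c: "c \<in> ein e"
    have "c \<in> M0 A n \<union> OS ?Q" using cQ c past_self unfolding config_def by blast
    then have "c \<in> M0 A n \<union> OS ?Q'"
    proof
      assume "c \<in> OS ?Q"
      then obtain x j where x: "x \<in> ?Q" "c = Cout x j" "etr x j \<noteq> None" by (auto simp: OS_def eout_def)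
      have "x \<noteq> e" using c x Cout_not_in_own by blast
      then show ?thesis using x by (simp add: Cout_OS)
    qed simp
    moreover have "c \<notin> IS ?Q'"
    proof
      assume "c \<in> IS ?Q'"
      then obtain y where y: "y \<in> ?Q'" "c \<in> ein y" by (auto simp: IS_iff)
      have "\<forall>x\<in>?Q. \<forall>x'\<in>?Q. x \<noteq> x' \<longrightarrow> ein x \<inter> ein x' = {}" using cQ unfolding config_def by blast
      then have "ein y \<inter> ein e = {}" using y past_self by blast
      then show False using y c by blast
    qed
    ultimately show "c \<in> mkS ?Q'" by (simp add: mkS_def)
  qed
  have ins: "e \<notin> ?Q' \<and> config (insert e ?Q') \<and> mkS (insert e ?Q') = fire (mkS ?Q') e"
    using config_insert[OF cQ' we inp] .
  have QQ: "insert e ?Q' = ?Q" using past_self by blast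
  have cutP: "iscut (mkS P)" using config_cut[OF cP] .
  have wr: "\<forall>x\<in>set \<rho>. wfe x" using r(1) cQ' config_wfe by blast
  have ex: "iscut (mkS ?Q') \<and> lpath (gstep A n) (gst (mkS P)) (map eact \<rho>) (gst (mkS ?Q'))"
    using fseq_exec[OF cutP r(3) wr] r(4) by simp
  have last: "gstep A n (gst (mkS ?Q')) (eact e) (gst (mkS ?Q))"
    using fire_gstep[of "mkS ?Q'" e] ex we inp ins QQ by simp
  have jb: "jc (mkS P) i = b" using jc_eq[OF cutP bP bi] .
  have free: "\<forall>x\<in>set \<rho>. \<not> ievent i x"
  proof (rule ccontr)
    assume "\<not> (\<forall>x\<in>set \<rho>. \<not> ievent i x)"
    then have "\<exists>x\<in>set \<rho>. ievent i x" by blast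
    then obtain u x v where uxv: "\<rho> = u @ x # v" "ievent i x" "\<forall>y\<in>set u. \<not> ievent i y"
      using split_list_first_prop[of \<rho> "ievent i"] by auto
    have fu: "fseq (mkS P) u" and fx: "ein x \<subseteq> mk (mkS P) u"
      using r(3) uxv(1) fseq_append[of "mkS P" u "x # v"] by auto
    have wu1: "\<forall>y\<in>set u. wfe y" using wr uxv(1) by simp
    have wu2: "\<forall>y\<in>set u. etr y i = None" using uxv(3) unfolding ievent_def by blast
    have wu: "\<forall>y\<in>set u. wfe y \<and> etr y i = None" using wu1 wu2 by blast
    have cu: "iscut (mk (mkS P) u)" using fseq_exec[OF cutP fu] wu by auto
    have jcb: "jc (mk (mkS P) u) i = b" using jc_ifree[OF cutP fu wu] jb by simp
    obtain tr where tr: "etr x i = Some tr" using uxv(2) by (auto simp: ievent_def)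
    have wx: "wfe x" using wr uxv by simp
    have "b \<in> ein x" using jc_consumed[OF cu wx fx tr] jcb by simp
    moreover have "x \<in> ?Q" "x \<noteq> e" using r(1) uxv(1) by auto
    moreover have "\<forall>y\<in>?Q. \<forall>y'\<in>?Q. y \<noteq> y' \<longrightarrow> ein y \<inter> ein y' = {}" using cQ unfolding config_def by blast
    ultimately show False using be past_self by blast
  qed
  have "\<forall>a\<in>set (map eact \<rho>). a \<notin> Si" using free wr ievent_Si by auto
  moreover have "eact e \<in> Si" using ie ievent_Si[OF we] by simp
  moreover have "lpath (gstep A n) (gst (mkS P)) (map eact \<rho> @ [eact e]) (gst (mkS ?Q))"
    unfolding lpath_snoc using ex last by blast
  ultimately show ?thesis unfolding istep_def by blast
qed

end

locale tstate = main A n i for A :: "nat \<Rightarrow> ('a, 's) lts" and n i +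
  fixes s :: "('a, 's) alg_state"
  assumes Rs: "(alg_step A n i)\<^sup>*\<^sup>* ({}, {}) s" and Ts: "alg_terminated A n s"
begin

lemma I: "inv (fst s) (snd s)" using inv_reach[OF Rs] .

lemma I_ev: "e \<in> fst s \<Longrightarrow> wfe e \<and> config (past e) \<and> past e \<subseteq> fst s"
  using I by (simp add: inv_def)

lemma I_cp: "(c, c') \<in> snd s \<Longrightarrow> c \<in> fst s \<and> c' \<in> fst s \<and> ievent i c \<and> ievent i c' \<and> St A n c = St A n c'"
  using I unfolding inv_def by fastforce

lemma icond_ev: "e \<in> fst s \<Longrightarrow> ievent i e \<Longrightarrow> Mj A n e i = Cout e i"
  using Mj_icond[of e i] I_ev iface by (simp add: ievent_def)

lemma R_eq: "{(Mj A n e i, Mj A n e' i) | e e'. (e, e') \<in> snd s} = Rc (snd s)"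
proof -
  have "(Mj A n e i, Mj A n e' i) = (Cout e i, Cout e' i)" if "(e, e') \<in> snd s" for e e'
    using that I_cp icond_ev by simp
  note eq = this
  show ?thesis unfolding Rc_def
  proof (intro equalityI subsetI)
    fix p assume "p \<in> {(Mj A n e i, Mj A n e' i) | e e'. (e, e') \<in> snd s}"
    then obtain e e' where p: "p = (Mj A n e i, Mj A n e' i)" "(e, e') \<in> snd s" by blast
    then have "p = (Cout e i, Cout e' i)" using eq by simp
    then show "p \<in> {(Cout c i, Cout c' i) | c c'. (c, c') \<in> snd s}" using p(2) by blast
  next
    fix p assume "p \<in> {(Cout c i, Cout c' i) | c c'. (c, c') \<in> snd s}"
    then obtain e e' where p: "p = (Cout e i, Cout e' i)" "(e, e') \<in> snd s" by blast
    then have "p = (Mj A n e i, Mj A n e' i)" using eq by simp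
    then show "p \<in> {(Mj A n e i, Mj A n e' i) | e e'. (e, e') \<in> snd s}" using p(2) by blast
  qed
qed

abbreviation fe where "fe \<equiv> foldeq A n i s"

lemma fe_eq: "fe = (Id_on (iconds A n i (fst s)) \<union> Rc (snd s) \<union> (Rc (snd s))\<inverse>)\<^sup>*"
  unfolding foldeq_def Let_def R_eq ..

lemma fe_sym: "(b, c) \<in> fe \<Longrightarrow> (c, b) \<in> fe"
proof -
  assume bc: "(b, c) \<in> fe"
  have "sym (Id_on (iconds A n i (fst s)) \<union> Rc (snd s) \<union> (Rc (snd s))\<inverse>)"
    unfolding sym_def by auto
  then have "sym fe" unfolding fe_eq by (rule sym_rtrancl)
  then show ?thesis using bc unfolding sym_def by blast
qed

lemma fe_class: "(b, c) \<in> fe \<Longrightarrow> fe `` {b} = fe `` {c}"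
proof -
  assume bc: "(b, c) \<in> fe"
  have cb: "(c, b) \<in> fe" using fe_sym[OF bc] .
  have tr: "(x, y) \<in> fe \<Longrightarrow> (y, z) \<in> fe \<Longrightarrow> (x, z) \<in> fe" for x y z
    unfolding fe_eq by (rule rtrancl_trans)
  show ?thesis using tr bc cb by blast
qed

lemma fe_refl: "(b, b) \<in> fe" unfolding fe_eq by simp

lemma Rc_fe: "(Rc (snd s) \<union> (Rc (snd s))\<inverse>)\<^sup>* \<subseteq> fe"
  unfolding fe_eq by (rule rtrancl_mono) blast

definition assoc :: "('a,'s) cond \<Rightarrow> (nat \<Rightarrow> 's) \<Rightarrow> bool" where
  "assoc b g \<longleftrightarrow> (b = C0 i (lts_init (A i)) \<and> g = ginit A)
     \<or> (\<exists>y. y \<in> fst s \<and> ievent i y \<and> b = Cout y i \<and> g = gst (Mark A n y))"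

lemma assoc_fe: "(b, c) \<in> fe \<Longrightarrow> assoc b g \<Longrightarrow> assoc c g"
proof -
  assume bc: "(b, c) \<in> fe" and ab: "assoc b g"
  have "(b, c) \<in> (Id_on (iconds A n i (fst s)) \<union> Rc (snd s) \<union> (Rc (snd s))\<inverse>)\<^sup>*" using bc fe_eq by simp
  then show "assoc c g"
  proof (induction rule: rtrancl_induct)
    case base then show ?case using ab .
  next
    case (step c1 c2)
    have pair: "assoc (Cout e i) g \<Longrightarrow> (e, e') \<in> snd s \<or> (e', e) \<in> snd s \<Longrightarrow> assoc (Cout e' i) g" for e e'
    proof -
      assume a: "assoc (Cout e i) g" and p: "(e, e') \<in> snd s \<or> (e', e) \<in> snd s"
      from a have g: "g = gst (Mark A n e)" and eE: "e \<in> fst s" by (auto simp: assoc_def)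
      from p have "St A n e = St A n e'" and "e' \<in> fst s" and "ievent i e'" using I_cp by auto
      then show ?thesis using g St_eq_iff by (auto simp: assoc_def)
    qed
    from step.hyps(2) show ?case
    proof (elim UnE)
      assume "(c1, c2) \<in> Id_on (iconds A n i (fst s))" then show ?thesis using step.IH by auto
    next
      assume "(c1, c2) \<in> Rc (snd s)"
      then obtain e e' where "c1 = Cout e i" "c2 = Cout e' i" "(e, e') \<in> snd s" by (auto simp: Rc_def)
      then show ?thesis using pair step.IH by blast
    next
      assume "(c1, c2) \<in> (Rc (snd s))\<inverse>"
      then obtain e e' where "c2 = Cout e i" "c1 = Cout e' i" "(e, e') \<in> snd s" by (auto simp: Rc_def)
      then show ?thesis using pair step.IH by blast
    qed
  qed
qed

lemma sound_step:
  assumes ab: "assoc b g" and nt: "(b, a, b') \<in> Ntrans i (fst s)"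
  shows "\<exists>g'. istep g a g' \<and> assoc b' g'"
proof -
  from nt obtain e where e: "e \<in> fst s" "ievent i e" "b \<in> ein e" "fst (clabel b) = i" "a = eact e" "b' = Cout e i"
    unfolding Ntrans_def by blast
  have cQ: "config (past e)" using I_ev[OF e(1)] by simp
  have ab': "assoc b' (gst (mkS (past e)))" using e by (auto simp: assoc_def Mark_eq)
  from ab[unfolded assoc_def] show ?thesis
  proof (elim disjE exE conjE)
    assume b: "b = C0 i (lts_init (A i))" and g: "g = ginit A"
    have "b \<in> mkS {}" using b iface by (simp add: M0_iff)
    then have "istep (gst (mkS {})) (eact e) (gst (mkS (past e)))"
      using seg[OF config_empty cQ _ _ e(4) e(3) e(2)] by simp
    then show ?thesis using g e(5) ab' gst_M0 by auto
  next
    fix y assume y: "y \<in> fst s" "ievent i y" "b = Cout y i" and g: "g = gst (Mark A n y)"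
    have cP: "config (past y)" using I_ev[OF y(1)] by simp
    have "(y, e) \<in> dpred" using e(3) y(3) by (auto simp: dpred_iff)
    then have "y \<in> past e" using past_closed past_self by blast
    then have PQ: "past y \<subseteq> past e" by (rule past_mono)
    have "b \<in> mkS (past y)" using Cout_in_Mark[of y i] y by (simp add: Mark_eq ievent_def)
    then have "istep (gst (mkS (past y))) (eact e) (gst (mkS (past e)))"
      using seg[OF cP cQ PQ _ e(4) e(3) e(2)] by simp
    then show ?thesis using g e(5) ab' by (auto simp: Mark_eq)
  qed
qed

theorem sound: "TrFold A n i s \<subseteq> traces_of (ginit A) istep"
  unfolding TrFold_def
proof (rule sim_traces[where R = "\<lambda>X g. \<forall>b\<in>X. assoc b g"])
  show "\<forall>b\<in>fe `` {C0 i (lts_init (A i))}. assoc b (ginit A)"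
    using assoc_fe by (auto simp: assoc_def)
next
  fix X g a Y
  assume R: "\<forall>b\<in>X. assoc b g" and fs: "fold_step A n i s X a Y"
  then obtain b b' where bb: "(b, a, b') \<in> Ntrans i (fst s)" "X = fe `` {b}" "Y = fe `` {b'}"
    unfolding fold_step_def by blast
  have "assoc b g" using R bb fe_refl by blast
  then obtain g' where g': "istep g a g'" "assoc b' g'" using sound_step bb(1) by blast
  have "\<forall>c\<in>Y. assoc c g'" using bb(3) g'(2) assoc_fe by blast
  then show "\<exists>g'. istep g a g' \<and> (\<forall>c\<in>Y. assoc c g')" using g' by blast
qed

end

context tstate begin

abbreviation CC where "CC \<equiv> fst ` snd s"

lemma C_ievent: "x \<in> CC \<Longrightarrow> ievent i x"
  using I_cp by auto

definition clean :: "('a,'s) event set \<Rightarrow> bool" where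
  "clean Q \<longleftrightarrow> Q = {} \<or> (\<exists>y\<in>fst s. y \<notin> CC \<and> ievent i y \<and> Q = past y)"

lemma past_noC: "y \<in> fst s \<Longrightarrow> y \<notin> CC \<Longrightarrow> past y \<inter> CC = {}"
proof -
  assume y: "y \<in> fst s" "y \<notin> CC"
  have "x \<notin> CC" if x: "x \<in> past y" for x
  proof (cases "x = y")
    case True then show ?thesis using y by simp
  next
    case False
    have "(x, y) \<in> dpred\<^sup>*" using x by (simp add: past_def)
    then have "(x, y) \<in> dpred\<^sup>+" using False by (meson rtranclD)
    then have "causal_less x y" by (simp add: causal_less_def)
    then show ?thesis using I y unfolding inv_def by blast
  qed
  then show ?thesis by blast
qed

lemma clean_props: "clean Q \<Longrightarrow> config Q \<and> Q \<subseteq> fst s \<and> Q \<inter> CC = {}"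
  unfolding clean_def using I_ev past_noC config_empty by blast

lemma new_event:
  assumes cF: "config F" and FE: "F \<subseteq> fst s" and FC: "F \<inter> CC = {}"
    and st: "gstep A n (gst (mkS F)) a h1"
  shows "\<exists>ev. ev \<in> fst s \<and> wfe ev \<and> eact ev = a \<and> ein ev \<subseteq> mkS F \<and> ev \<notin> F
           \<and> config (insert ev F) \<and> mkS (insert ev F) = fire (mkS F) ev \<and> gst (mkS (insert ev F)) = h1"
proof -
  let ?K = "mkS F"
  have cK: "iscut ?K" using config_cut[OF cF] .
  from st obtain t where t: "(a, t) \<in> gtrans A n" "gmove t (gst ?K) h1" by (auto simp: gstep_def)
  have mv: "case t j of None \<Rightarrow> h1 j = gst ?K j | Some (p, q) \<Rightarrow> gst ?K j = p \<and> h1 j = q" for j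
    using t(2) by (simp add: gmove_def)
  have ltn: "t j \<noteq> None \<Longrightarrow> j < n" for j using t(1) unfolding gtrans_def by (cases "j < n") auto
  let ?Ms = "{c \<in> ?K. t (fst (clabel c)) \<noteq> None}"
  have finMs: "finite ?Ms" using finite_mkS[OF cF] by simp
  define ev where "ev = Ev a t (Abs_fset ?Ms)"
  have ein: "ein ev = ?Ms" unfolding ev_def using finMs by (simp add: Abs_fset_inverse)
  have ea: "eact ev = a" and et: "etr ev = t" by (simp_all add: ev_def)
  have lab: "clabel ` ?Ms = preset t"
  proof (intro equalityI subsetI)
    fix x assume "x \<in> clabel ` ?Ms"
    then obtain c where c: "c \<in> ?K" "t (fst (clabel c)) \<noteq> None" "x = clabel c" by blast
    let ?j = "fst (clabel c)"
    obtain p q where pq: "t ?j = Some (p, q)" using c(2) by auto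
    have j: "?j < n" using ltn c(2) by blast
    have "jc ?K ?j = c" using jc_eq[OF cK c(1)] by simp
    then have "gst ?K ?j = snd (clabel c)" using j by (simp add: gst_def)
    moreover have "gst ?K ?j = p" using mv[of ?j] pq by simp
    ultimately have "clabel c = (?j, p)" by (metis prod.collapse)
    then show "x \<in> preset t" using c(3) pq by (auto simp: preset_def)
  next
    fix x assume "x \<in> preset t"
    then obtain j p q where x: "x = (j, p)" "t j = Some (p, q)" by (auto simp: preset_def)
    have j: "j < n" using ltn x(2) by blast
    let ?c = "jc ?K j"
    have c: "?c \<in> ?K" "fst (clabel ?c) = j" using jc_prop[OF cK j] by auto
    have "gst ?K j = p" using mv[of j] x(2) by simp
    then have "snd (clabel ?c) = p" using j by (simp add: gst_def)
    then have "clabel ?c = x" using c(2) x(1) by (metis prod.collapse)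
    moreover have "?c \<in> ?Ms" using c x(2) by simp
    ultimately show "x \<in> clabel ` ?Ms" by blast
  qed
  have wev: "wfe ev" unfolding wfe_def using ein ea et t(1) lab by simp
  have inp: "ein ev \<subseteq> ?K" using ein by blast
  have evE: "ev \<in> fst s"
  proof (rule ccontr)
    assume nE: "ev \<notin> fst s"
    have "pext A n (fst s) ev"
      unfolding pext_def using nE wev inp config_reach[OF cF FE]
      by (auto simp: wfe_def)
    moreover have "\<forall>x. causal_less x ev \<longrightarrow> x \<notin> CC"
    proof (intro allI impI)
      fix x assume "causal_less x ev"
      then have "(x, ev) \<in> dpred\<^sup>+" by (simp add: causal_less_def)
      then obtain z where z: "(x, z) \<in> dpred\<^sup>*" "(z, ev) \<in> dpred" using tranclD2 by metis
      then obtain j where "Cout z j \<in> ein ev" by (auto simp: dpred_iff)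
      then have "Cout z j \<in> M0 A n \<union> OS F" using inp by (auto simp: mkS_def)
      then have "z \<in> F" by (auto simp: Cout_OS Cout_M0)
      then have "past z \<subseteq> F" using config_past[OF cF] by blast
      then have "x \<in> F" using z(1) by (auto simp: past_def)
      then show "x \<notin> CC" using FC by blast
    qed
    ultimately have "allowed_ext A n s ev" by (simp add: allowed_ext_def)
    then show False using Ts by (auto simp: alg_terminated_def)
  qed
  have ins: "ev \<notin> F \<and> config (insert ev F) \<and> mkS (insert ev F) = fire ?K ev"
    using config_insert[OF cF wev inp] .
  have "gmove t (gst ?K) (gst (fire ?K ev))" using fire_cut[OF cK wev inp] et by simp
  then have "gst (fire ?K ev) = h1" using gmove_det t(2) by blast
  then show ?thesis using evE wev ea inp ins by auto
qed

lemma extend: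
  "config F \<Longrightarrow> F \<subseteq> fst s \<Longrightarrow> F \<inter> CC = {} \<Longrightarrow> lpath (gstep A n) (gst (mkS F)) u h \<Longrightarrow> \<forall>b\<in>set u. b \<notin> Si \<Longrightarrow>
   \<exists>F'. config F' \<and> F \<subseteq> F' \<and> F' \<subseteq> fst s \<and> F' \<inter> CC = {} \<and> (\<forall>x\<in>F' - F. \<not> ievent i x)
        \<and> gst (mkS F') = h \<and> jc (mkS F') i = jc (mkS F) i"
proof (induction u arbitrary: F)
  case Nil then show ?case by (intro exI[of _ F]) simp
next
  case (Cons b u)
  then obtain h1 where h1: "gstep A n (gst (mkS F)) b h1" "lpath (gstep A n) h1 u h" by auto
  obtain ev where ev: "ev \<in> fst s" "wfe ev" "eact ev = b" "ein ev \<subseteq> mkS F" "ev \<notin> F"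
      "config (insert ev F)" "mkS (insert ev F) = fire (mkS F) ev" "gst (mkS (insert ev F)) = h1"
    using new_event[OF Cons.prems(1-3) h1(1)] by blast
  have ni: "\<not> ievent i ev" using ev(2,3) Cons.prems(5) ievent_Si by auto
  have nC: "ev \<notin> CC" using ni C_ievent by blast
  have en: "etr ev i = None" using ni unfolding ievent_def by blast
  have jc1: "jc (mkS (insert ev F)) i = jc (mkS F) i"
    using ev(7) jc_fire_other[OF config_cut[OF Cons.prems(1)] ev(2) ev(4) iface en] by simp
  obtain F' where F': "config F'" "insert ev F \<subseteq> F'" "F' \<subseteq> fst s" "F' \<inter> CC = {}"
      "\<forall>x\<in>F' - insert ev F. \<not> ievent i x" "gst (mkS F') = h" "jc (mkS F') i = jc (mkS (insert ev F)) i"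
    using Cons.IH[of "insert ev F"] ev Cons.prems nC h1(2) by auto
  have "\<forall>x\<in>F' - F. \<not> ievent i x" using F'(5) ni by blast
  then show ?case using F' jc1 by (intro exI[of _ F']) auto
qed

definition Sim :: "(nat \<Rightarrow> 's) \<Rightarrow> ('a,'s) cond set \<Rightarrow> bool" where
  "Sim g X \<longleftrightarrow> (\<exists>Q. clean Q \<and> X = fe `` {jc (mkS Q) i}
      \<and> (\<exists>u. (\<forall>b\<in>set u. b \<notin> Si) \<and> lpath (gstep A n) (gst (mkS Q)) u g))"

lemma jc_past: "y \<in> fst s \<Longrightarrow> ievent i y \<Longrightarrow> jc (mkS (past y)) i = Cout y i"
  using icond_ev Mj_eq Mark_eq by metis

lemma complete_step:
  assumes S: "Sim g X" and ist: "istep g a g'"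
  shows "\<exists>Y. fold_step A n i s X a Y \<and> Sim g' Y"
proof -
  from S obtain Q u1 where Q: "clean Q" "X = fe `` {jc (mkS Q) i}" "\<forall>b\<in>set u1. b \<notin> Si"
      "lpath (gstep A n) (gst (mkS Q)) u1 g" unfolding Sim_def by blast
  from ist obtain u2 where aS: "a \<in> Si" and u2: "\<forall>b\<in>set u2. b \<notin> Si" "lpath (gstep A n) g (u2 @ [a]) g'"
    unfolding istep_def by blast
  have "lpath (gstep A n) (gst (mkS Q)) ((u1 @ u2) @ [a]) g'" using Q(4) u2(2) lpath_append by fastforce
  then obtain h where h: "lpath (gstep A n) (gst (mkS Q)) (u1 @ u2) h" "gstep A n h a g'"
    unfolding lpath_snoc by blast
  have cl: "config Q" "Q \<subseteq> fst s" "Q \<inter> CC = {}" using clean_props[OF Q(1)] by auto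
  have fr: "\<forall>b\<in>set (u1 @ u2). b \<notin> Si" using Q(3) u2(1) by auto
  obtain F' where F': "config F'" "Q \<subseteq> F'" "F' \<subseteq> fst s" "F' \<inter> CC = {}" "\<forall>x\<in>F' - Q. \<not> ievent i x"
      "gst (mkS F') = h" "jc (mkS F') i = jc (mkS Q) i"
    using extend[OF cl h(1) fr] by blast
  obtain ev where ev: "ev \<in> fst s" "wfe ev" "eact ev = a" "ein ev \<subseteq> mkS F'" "ev \<notin> F'"
      "config (insert ev F')" "mkS (insert ev F') = fire (mkS F') ev" "gst (mkS (insert ev F')) = g'"
  proof -
    have "gstep A n (gst (mkS F')) a g'" using h(2) F'(6) by simp
    then show ?thesis using new_event[OF F'(1) F'(3) F'(4)] that by blast
  qed
  let ?Qf = "insert ev F'"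
  have iev: "ievent i ev" using ev(2,3) aS ievent_Si by auto
  then obtain tr where tr: "etr ev i = Some tr" by (auto simp: ievent_def)
  let ?b0 = "jc (mkS Q) i"
  have b0in: "?b0 \<in> ein ev" using jc_consumed[OF config_cut[OF F'(1)] ev(2) ev(4) tr] F'(7) by simp
  have b0i: "fst (clabel ?b0) = i" using jc_prop[OF config_cut[OF cl(1)] iface] by simp
  have nt: "(?b0, a, Cout ev i) \<in> Ntrans i (fst s)"
    unfolding Ntrans_def using ev(1,3) iev b0in b0i by blast
  let ?Y = "fe `` {Cout ev i}"
  have fs: "fold_step A n i s X a ?Y" unfolding fold_step_def using nt Q(2) by blast
  obtain y where y: "y \<in> fst s" "y \<notin> CC" "ievent i y" "St A n y = St A n ev" "(Cout ev i, Cout y i) \<in> fe"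
  proof (cases "ev \<in> CC")
    case False then show ?thesis using that[of ev] ev(1) iev fe_refl by blast
  next
    case True
    then obtain c' where "c' \<in> fst s" "c' \<notin> CC" "ievent i c'" "St A n c' = St A n ev"
        "(Cout ev i, Cout c' i) \<in> (Rc (snd s) \<union> (Rc (snd s))\<inverse>)\<^sup>*"
      using I unfolding inv_def by blast
    then show ?thesis using that[of c'] Rc_fe by blast
  qed
  have cleanY: "clean (past y)" unfolding clean_def using y by blast
  have Yeq: "?Y = fe `` {jc (mkS (past y)) i}" using fe_class[OF y(5)] jc_past[OF y(1) y(3)] by simp
  have cQf: "config ?Qf" using ev(6) .
  have evQf: "ev \<in> ?Qf" by simp
  have cpe: "config (past ev)" using config_past_config[OF cQf evQf] .
  have pQf: "past ev \<subseteq> ?Qf" using config_past[OF cQf evQf] .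
  obtain \<rho> where r: "set \<rho> = ?Qf - past ev" "lpath (gstep A n) (gst (mkS (past ev))) (map eact \<rho>) (gst (mkS ?Qf))"
    using config_ext_exec[OF cpe cQf pQf] by blast
  have Qsub: "Q \<subseteq> past ev"
  proof (cases "Q = {}")
    case False
    then obtain y0 where y0: "y0 \<in> fst s" "ievent i y0" "Q = past y0" using Q(1) unfolding clean_def by blast
    then have "?b0 = Cout y0 i" using jc_past by simp
    then have "(y0, ev) \<in> dpred" using b0in by (auto simp: dpred_iff)
    then have "y0 \<in> past ev" using past_closed past_self by blast
    then show ?thesis using y0(3) past_mono by blast
  qed simp
  have rfree: "\<forall>b\<in>set (map eact \<rho>). b \<notin> Si"
  proof
    fix b assume "b \<in> set (map eact \<rho>)"
    then obtain x where x: "x \<in> set \<rho>" "b = eact x" by auto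
    then have x2: "x \<in> ?Qf" "x \<notin> past ev" using r(1) by auto
    then have "x \<noteq> ev" using past_self by blast
    then have "x \<in> F' - Q" using x2 Qsub by blast
    then have "\<not> ievent i x" using F'(5) by blast
    moreover have "wfe x" using config_wfe[OF cQf x2(1)] .
    ultimately show "b \<notin> Si" using x ievent_Si by simp
  qed
  have geq: "gst (mkS (past y)) = gst (mkS (past ev))" using y(4) St_eq_iff Mark_eq by simp
  have ex: "\<exists>u. (\<forall>b\<in>set u. b \<notin> Si) \<and> lpath (gstep A n) (gst (mkS (past y))) u g'"
    using rfree r(2) geq ev(8) by (intro exI[of _ "map eact \<rho>"]) simp
  have "Sim g' ?Y" unfolding Sim_def
    using cleanY Yeq ex by blast
  then show ?thesis using fs by blast
qed

theorem complete: "traces_of (ginit A) istep \<subseteq> TrFold A n i s"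
  unfolding TrFold_def
proof (rule sim_traces[where R = Sim])
  have "jc (mkS {}) i = C0 i (lts_init (A i))"
    using jc_eq[OF cut_M0, of "C0 i (lts_init (A i))" i] iface by (simp add: M0_iff)
  then show "Sim (ginit A) (fe `` {C0 i (lts_init (A i))})"
    unfolding Sim_def clean_def using gst_M0 by (intro exI[of _ "{}"]) (auto intro: exI[of _ "[]"])
next
  fix g X a g'
  assume "Sim g X" "istep g a g'"
  then show "\<exists>Y. fold_step A n i s X a Y \<and> Sim g' Y" using complete_step by blast
qed

theorem TrFold_eq: "TrFold A n i s = proj Si ` TrPar A n"
  using sound complete proj_TrPar by blast

end

theorem theorem1:
  fixes A :: "nat \<Rightarrow> ('a, 's) lts" and n i :: nat
  assumes fin: "\<forall>j<n. finite_lts (A j)"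
    and iface: "i < n"
    and nondiv: "\<not> divergent A n i"
  shows "\<not> (\<exists>f. f 0 = ({}, {}) \<and> (\<forall>k. alg_step A n i (f k) (f (Suc k))))
       \<and> (\<forall>s. (alg_step A n i)\<^sup>*\<^sup>* ({}, {}) s \<and> alg_terminated A n s \<longrightarrow>
              finite (fst s) \<and> bp A n (fst s)
              \<and> TrFold A n i s = proj (lts_acts (A i)) ` TrPar A n)"
proof -
  interpret M: main A n i by (unfold_locales) (use fin iface nondiv in auto)
  have t: "\<not> (\<exists>f. f 0 = ({}, {}) \<and> (\<forall>k. alg_step A n i (f k) (f (Suc k))))"
    by (rule M.alg_terminates)
  have r: "finite (fst s) \<and> bp A n (fst s) \<and> TrFold A n i s = proj (lts_acts (A i)) ` TrPar A n"
    if s: "(alg_step A n i)\<^sup>*\<^sup>* ({}, {}) s" "alg_terminated A n s" for s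
  proof -
    interpret T: tstate A n i s by (unfold_locales) (use s in auto)
    have "finite (fst s) \<and> bp A n (fst s)" using T.I by (simp add: M.inv_def)
    moreover have "TrFold A n i s = proj (lts_acts (A i)) ` TrPar A n" using T.TrFold_eq .
    ultimately show ?thesis by simp
  qed
  show ?thesis using t r by blast
qed

end
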